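(* Let $\gamma>0$ and $f\in C_c^\infty(\mathbb{R}^2)$. Then for every $1\le p\le\infty$, $\|T_\gamma f\|_{L^p}\le\|f\|_{L^p}$, where $T_\gamma$ is either $\ln^{-\gamma}(e-\Delta)$ or $\ln^{-\gamma}(e+|\nabla|)$.
   Context: $\ln^{-\gamma}(e-\Delta)$ and $\ln^{-\gamma}(e+|\nabla|)$ are the Fourier multipliers with symbols $\ln^{-\gamma}(e+|k|^2)$ and $\ln^{-\gamma}(e+|k|)$ respectively. *)

theory Defs
  imports "HOL-Analysis.Analysis" "HOL-Probability.Essential_Supremum"
begin

fun Ck2 :: "nat \<Rightarrow> (real^2 \<Rightarrow> complex) \<Rightarrow> bool" where
  "Ck2 0 f = continuous_on UNIV f"
| "Ck2 (Suc n) f = (continuous_on UNIV f \<and>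
     (\<forall>i::2. \<exists>g. (\<forall>x. ((\<lambda>t. f (x + t *\<^sub>R axis i 1)) has_vector_derivative g x) (at 0))
                 \<and> Ck2 n g))"

definition smooth2 :: "(real^2 \<Rightarrow> complex) \<Rightarrow> bool" where
  "smooth2 f = (\<forall>k. Ck2 k f)"

definition Cc_inf2 :: "(real^2 \<Rightarrow> complex) \<Rightarrow> bool" where
  "Cc_inf2 f = (smooth2 f \<and> compact (closure {x. f x \<noteq> 0}))"

definition fourier2 :: "(real^2 \<Rightarrow> complex) \<Rightarrow> real^2 \<Rightarrow> complex" where
  "fourier2 f k = (\<integral>x. exp (- \<i> * complex_of_real (k \<bullet> x)) * f x \<partial>lborel)"

definition fourier_multiplier2 :: "(real^2 \<Rightarrow> real) \<Rightarrow> (real^2 \<Rightarrow> complex) \<Rightarrow> real^2 \<Rightarrow> complex" where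
  "fourier_multiplier2 m f x =
     complex_of_real (1 / (2 * pi)^2) *
     (\<integral>k. exp (\<i> * complex_of_real (k \<bullet> x)) * complex_of_real (m k) * fourier2 f k \<partial>lborel)"

text \<open>ln^{-gamma}(e - Laplacian): symbol ln^{-gamma}(e + |k|^2)\<close>
definition log_lap_symbol :: "real \<Rightarrow> real^2 \<Rightarrow> real" where
  "log_lap_symbol \<gamma> k = ln (exp 1 + (norm k)^2) powr (- \<gamma>)"

text \<open>ln^{-gamma}(e + |nabla|): symbol ln^{-gamma}(e + |k|)\<close>
definition log_grad_symbol :: "real \<Rightarrow> real^2 \<Rightarrow> real" where
  "log_grad_symbol \<gamma> k = ln (exp 1 + norm k) powr (- \<gamma>)"

definition Lp_norm2 :: "ennreal \<Rightarrow> (real^2 \<Rightarrow> complex) \<Rightarrow> ennreal" where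
  "Lp_norm2 p f =
     (if p = \<infinity> then esssup lborel (\<lambda>x. ennreal (norm (f x)))
      else (let I = (\<integral>\<^sup>+ x. ennreal (norm (f x) powr (enn2real p)) \<partial>lborel) in
            if I = \<infinity> then \<infinity> else ennreal (enn2real I powr (1 / enn2real p))))"

end

theory Submission
  imports Defs "HOL-Probability.Probability"
begin

lemma gauss_ft1:
  fixes v z :: real assumes v: "v > 0"
  shows "integrable lborel (\<lambda>\<xi>. exp (\<i> * complex_of_real (\<xi> * z)) * complex_of_real (exp (- v * \<xi>\<^sup>2)))"
    and "(\<integral>\<xi>. exp (\<i> * complex_of_real (\<xi> * z)) * complex_of_real (exp (- v * \<xi>\<^sup>2)) \<partial>lborel)
        = complex_of_real (sqrt (pi / v) * exp (- z\<^sup>2 / (4 * v)))"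
proof -
  define c where "c = sqrt (2 * v)"
  have c: "c > 0" using v by (simp add: c_def)
  have c2: "c\<^sup>2 = 2 * v" using v by (simp add: c_def)
  define t where "t = z / c"
  let ?g = "\<lambda>x. std_normal_density x *\<^sub>R iexp (t * x)"
  have ig: "integrable lborel ?g"
    by (rule Bochner_Integration.integrable_bound[where f="std_normal_density"])
       (auto simp: norm_mult)
  have char: "(\<integral>x. ?g x \<partial>lborel) = complex_of_real (exp (- (t^2) / 2))"
    using fun_cong[OF char_std_normal_distribution, of t]
    by (simp add: char_def integral_density)
  let ?h = "\<lambda>\<xi>. exp (\<i> * complex_of_real (\<xi> * z)) * complex_of_real (exp (- v * \<xi>\<^sup>2))"
  have gh: "?g (0 + c * \<xi>) = complex_of_real (1 / sqrt (2 * pi)) * ?h \<xi>" for \<xi>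
  proof -
    have "t * (c * \<xi>) = \<xi> * z" using c by (simp add: t_def)
    hence e1: "iexp (t * (c * \<xi>)) = exp (\<i> * complex_of_real (\<xi> * z))" by metis
    have "- (c * \<xi>)\<^sup>2 / 2 = - v * \<xi>\<^sup>2" using c2 by (simp add: power_mult_distrib)
    hence e2: "exp (- (c * \<xi>)\<^sup>2 / 2) = exp (- v * \<xi>\<^sup>2)" by metis
    show ?thesis
      unfolding std_normal_density_def scaleR_conv_of_real add_0 e1 e2[symmetric]
      by (simp add: mult_ac)
  qed
  have ih': "integrable lborel (\<lambda>\<xi>. ?g (0 + c * \<xi>))"
    using lborel_integrable_real_affine[OF ig, of c 0] c by simp
  hence "integrable lborel (\<lambda>\<xi>. complex_of_real (sqrt (2 * pi)) * ?g (0 + c * \<xi>))"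
    by (rule integrable_mult_right)
  moreover have "complex_of_real (sqrt (2 * pi)) * ?g (0 + c * \<xi>) = ?h \<xi>" for \<xi>
    unfolding gh by (simp add: of_real_mult[symmetric] del: of_real_mult)
  ultimately show ih: "integrable lborel ?h" by simp
  have "(\<integral>x. ?g x \<partial>lborel) = c *\<^sub>R (\<integral>\<xi>. ?g (0 + c * \<xi>) \<partial>lborel)"
    using lborel_integral_real_affine[of c ?g 0] c by simp
  also have "\<dots> = complex_of_real (c / sqrt (2 * pi)) * (\<integral>\<xi>. ?h \<xi> \<partial>lborel)"
    unfolding gh by (simp add: scaleR_conv_of_real)
  finally have "(\<integral>\<xi>. ?h \<xi> \<partial>lborel) = complex_of_real (sqrt (2 * pi) / c * exp (- (t^2) / 2))"
    using c char by (simp add: field_simps)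
  also have "sqrt (2 * pi) / c = sqrt (pi / v)"
    using v by (simp add: c_def real_sqrt_divide[symmetric])
  also have "- (t^2) / 2 = - z\<^sup>2 / (4 * v)"
    using c2 v by (simp add: t_def power_divide)
  finally show "(\<integral>\<xi>. ?h \<xi> \<partial>lborel) = complex_of_real (sqrt (pi / v) * exp (- z\<^sup>2 / (4 * v)))" .
qed

lemma integral_lborel_prod:
  fixes f :: "'a::euclidean_space \<Rightarrow> real \<Rightarrow> complex"
  assumes "\<And>b. b \<in> Basis \<Longrightarrow> integrable lborel (f b)"
  shows "integrable (lborel::'a measure) (\<lambda>x. \<Prod>b\<in>Basis. f b (x \<bullet> b))"
    and "(\<integral>x. (\<Prod>b\<in>Basis. f b (x \<bullet> b)) \<partial>(lborel::'a measure)) = (\<Prod>b\<in>Basis. (\<integral>x. f b x \<partial>lborel))"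
proof -
  interpret product_sigma_finite "\<lambda>_::'a. lborel :: real measure" by standard
  have m: "(\<lambda>x. \<Prod>b\<in>Basis. f b (x \<bullet> b)) \<in> borel_measurable (lborel::'a measure)"
    using assms by (intro borel_measurable_prod) (auto intro!: measurable_compose[OF _ borel_measurable_integrable] borel_measurable_inner)
  show "integrable (lborel::'a measure) (\<lambda>x. \<Prod>b\<in>Basis. f b (x \<bullet> b))"
    apply (subst lborel_eq)
    apply (subst integrable_distr_eq)
    apply simp
    using m apply simp
    apply (simp add: inner_sum_left inner_Basis if_distrib cong: if_cong)
    apply (rule product_integrable_prod)
    using assms by auto
  show "(\<integral>x. (\<Prod>b\<in>Basis. f b (x \<bullet> b)) \<partial>(lborel::'a measure)) = (\<Prod>b\<in>Basis. (\<integral>x. f b x \<partial>lborel))"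
    apply (subst lborel_eq)
    apply (subst integral_distr)
    apply simp
    using m apply simp
    apply (simp add: inner_sum_left inner_Basis if_distrib cong: if_cong)
    apply (subst product_integral_prod)
    using assms by (auto simp: product_integral_singleton)
qed

lemma gauss_ft:
  fixes z :: "'a::euclidean_space" and v :: real assumes v: "v > 0"
  shows "integrable lborel (\<lambda>k::'a. exp (\<i> * complex_of_real (k \<bullet> z)) * complex_of_real (exp (- v * (norm k)\<^sup>2)))"
    and "(\<integral>k. exp (\<i> * complex_of_real (k \<bullet> z)) * complex_of_real (exp (- v * (norm k)\<^sup>2)) \<partial>lborel)
        = complex_of_real (sqrt (pi / v) ^ DIM('a) * exp (- (norm z)\<^sup>2 / (4 * v)))"
proof -
  let ?f = "\<lambda>b \<xi>. exp (\<i> * complex_of_real (\<xi> * (z \<bullet> b))) * complex_of_real (exp (- v * \<xi>\<^sup>2))"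
  have eq: "exp (\<i> * complex_of_real (k \<bullet> z)) * complex_of_real (exp (- v * (norm k)\<^sup>2)) = (\<Prod>b\<in>Basis. ?f b (k \<bullet> b))" for k :: 'a
  proof -
    have "k \<bullet> z = (\<Sum>b\<in>Basis. (k \<bullet> b) * (z \<bullet> b))" by (rule euclidean_inner)
    moreover have "(norm k)\<^sup>2 = (\<Sum>b\<in>Basis. (k \<bullet> b)\<^sup>2)"
      unfolding power2_norm_eq_inner by (subst euclidean_inner) (simp add: power2_eq_square)
    ultimately show ?thesis
      by (simp add: prod.distrib sum_distrib_left ring_distribs exp_sum[symmetric] of_real_sum exp_of_real[symmetric]
                    sum_negf)
  qed
  show "integrable lborel (\<lambda>k::'a. exp (\<i> * complex_of_real (k \<bullet> z)) * complex_of_real (exp (- v * (norm k)\<^sup>2)))"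
    unfolding eq by (rule integral_lborel_prod(1)) (rule gauss_ft1(1)[OF v])
  have "(\<integral>k. exp (\<i> * complex_of_real (k \<bullet> z)) * complex_of_real (exp (- v * (norm k)\<^sup>2)) \<partial>lborel)
     = (\<Prod>b\<in>(Basis::'a set). complex_of_real (sqrt (pi / v) * exp (- (z \<bullet> b)\<^sup>2 / (4 * v))))"
    unfolding eq
    by (subst integral_lborel_prod(2), rule gauss_ft1(1)[OF v], rule prod.cong, rule refl, rule gauss_ft1(2)[OF v])
  also have "\<dots> = complex_of_real (sqrt (pi / v) ^ DIM('a) * exp (- (norm z)\<^sup>2 / (4 * v)))"
  proof -
    have "(norm z)\<^sup>2 = (\<Sum>b\<in>Basis. (z \<bullet> b)\<^sup>2)"
      unfolding power2_norm_eq_inner by (subst euclidean_inner) (simp add: power2_eq_square)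
    hence "exp (- (norm z)\<^sup>2 / (4 * v)) = (\<Prod>b\<in>(Basis::'a set). exp (- (z \<bullet> b)\<^sup>2 / (4 * v)))"
      by (simp add: exp_sum[symmetric] sum_divide_distrib[symmetric] sum_negf)
    thus ?thesis
      by (simp add: prod.distrib of_real_prod)
  qed
  finally show "(\<integral>k. exp (\<i> * complex_of_real (k \<bullet> z)) * complex_of_real (exp (- v * (norm k)\<^sup>2)) \<partial>lborel)
        = complex_of_real (sqrt (pi / v) ^ DIM('a) * exp (- (norm z)\<^sup>2 / (4 * v)))" .
qed

lemma gamma_nn:
  fixes a c :: real assumes a: "a > 0" and c: "c > 0"
  shows "(\<integral>\<^sup>+x. ennreal (indicator {0..} x * x powr (a - 1) * exp (- c * x)) \<partial>lborel) = ennreal (Gamma a / c powr a)"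
proof -
  let ?f = "\<lambda>t. ennreal (indicator {0..} t * t powr (a - 1) / exp t)"
  have "ennreal (Gamma a) = (\<integral>\<^sup>+t. ?f t \<partial>lborel)"
    using Gamma_conv_nn_integral_real[OF a] by simp
  also have "\<dots> = ennreal c * (\<integral>\<^sup>+x. ?f (0 + c * x) \<partial>lborel)"
    using nn_integral_real_affine[of ?f c 0] c by simp
  also have "(\<lambda>x. ?f (0 + c * x)) = (\<lambda>x. ennreal (c powr (a - 1)) * ennreal (indicator {0..} x * x powr (a - 1) * exp (- c * x)))"
  proof
    fix x :: real
    show "?f (0 + c * x) = ennreal (c powr (a - 1)) * ennreal (indicator {0..} x * x powr (a - 1) * exp (- c * x))"
    proof (cases "x \<ge> 0")
      case True
      then show ?thesis using c
        by (simp add: ennreal_mult[symmetric] powr_mult exp_minus field_simps indicator_def)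
    next
      case False
      then show ?thesis using c by (simp add: indicator_def zero_le_mult_iff)
    qed
  qed
  also have "ennreal c * (\<integral>\<^sup>+x. ennreal (c powr (a - 1)) * ennreal (indicator {0..} x * x powr (a - 1) * exp (- c * x)) \<partial>lborel)
     = ennreal (c powr a) * (\<integral>\<^sup>+x. ennreal (indicator {0..} x * x powr (a - 1) * exp (- c * x)) \<partial>lborel)"
  proof -
    have "c * c powr (a - 1) = c powr a" using c by (simp add: powr_mult_base)
    moreover have "(\<integral>\<^sup>+x. ennreal (c powr (a - 1)) * ennreal (indicator {0..} x * x powr (a - 1) * exp (- c * x)) \<partial>lborel)
      = ennreal (c powr (a - 1)) * (\<integral>\<^sup>+x. ennreal (indicator {0..} x * x powr (a - 1) * exp (- c * x)) \<partial>lborel)"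
      by (rule nn_integral_cmult) simp
    moreover have "ennreal c * ennreal (c powr (a - 1)) = ennreal (c powr a)"
      using c `c * c powr (a - 1) = c powr a` by (simp add: ennreal_mult[symmetric])
    ultimately show ?thesis by (simp only: mult.assoc[symmetric])
  qed
  finally have *: "ennreal (Gamma a) = ennreal (c powr a) * (\<integral>\<^sup>+x. ennreal (indicator {0..} x * x powr (a - 1) * exp (- c * x)) \<partial>lborel)" .
  have P: "c powr a > 0" using c by simp
  have "ennreal (c powr a) * ennreal (Gamma a / c powr a) = ennreal (Gamma a)"
    using P a by (simp add: ennreal_mult[symmetric] Gamma_real_pos less_imp_le)
  with * have "ennreal (c powr a) * (\<integral>\<^sup>+x. ennreal (indicator {0..} x * x powr (a - 1) * exp (- c * x)) \<partial>lborel)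
     = ennreal (c powr a) * ennreal (Gamma a / c powr a)" by simp
  then show ?thesis using P by (subst (asm) ennreal_mult_cancel_left) auto
qed

lemma nn_integral_fin_has_integral:
  fixes F :: "real \<Rightarrow> real" and S :: "real set"
  assumes m: "(\<lambda>x. indicator S x * F x) \<in> borel_measurable borel" and nn: "\<And>x. x \<in> S \<Longrightarrow> F x \<ge> 0"
    and fin: "(\<integral>\<^sup>+x. ennreal (indicator S x * F x) \<partial>lborel) < \<infinity>"
  shows "F absolutely_integrable_on S \<and> (F has_integral integral S F) S \<and>
         (\<integral>\<^sup>+x. ennreal (indicator S x * F x) \<partial>lborel) = ennreal (integral S F)"
proof -
  have nn': "\<And>x. 0 \<le> indicator S x * F x" using nn by (simp add: indicator_def)
  have i: "(\<lambda>x. indicator S x * F x) integrable_on UNIV"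
    using nn_integral_integrable_on[OF m nn' fin] .
  have eqf: "(\<lambda>x. indicator S x * F x) = (\<lambda>x. if x \<in> S then F x else 0)"
    by (auto simp: indicator_def fun_eq_iff)
  have iS: "F integrable_on S" using i unfolding eqf integrable_restrict_UNIV .
  have e: "(\<integral>\<^sup>+x. ennreal (indicator S x * F x) \<partial>lborel) = integral UNIV (\<lambda>x. indicator S x * F x)"
    using nn_integral_lborel_eq_integral[OF m nn' fin] .
  have "integral UNIV (\<lambda>x. indicator S x * F x) = integral S F"
    unfolding eqf integral_restrict_UNIV ..
  then show ?thesis using iS e nn absolutely_integrable_on_iff_nonneg by auto
qed

lemma nn_subst:
  fixes f g g' :: "real \<Rightarrow> real" and S :: "real set"
  assumes S: "S \<in> sets lebesgue"
    and der: "\<And>x. x \<in> S \<Longrightarrow> (g has_field_derivative g' x) (at x within S)"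
    and inj: "inj_on g S"
    and nn: "\<And>y. y \<in> g ` S \<Longrightarrow> f y \<ge> 0"
    and m1: "(\<lambda>x. indicator S x * (\<bar>g' x\<bar> * f (g x))) \<in> borel_measurable borel"
    and m2: "(\<lambda>y. indicator (g ` S) y * f y) \<in> borel_measurable borel"
  shows "(\<integral>\<^sup>+x. ennreal (indicator S x * (\<bar>g' x\<bar> * f (g x))) \<partial>lborel)
       = (\<integral>\<^sup>+y. ennreal (indicator (g ` S) y * f y) \<partial>lborel)"
proof -
  note cv = has_absolute_integral_change_of_variables_1'[OF S der inj]
  have nn1: "\<And>x. x \<in> S \<Longrightarrow> \<bar>g' x\<bar> * f (g x) \<ge> 0" using nn by auto
  show ?thesis
  proof (cases "(\<integral>\<^sup>+y. ennreal (indicator (g ` S) y * f y) \<partial>lborel) < \<infinity>")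
    case True
    note A = nn_integral_fin_has_integral[OF m2 nn True]
    hence "(\<lambda>x. \<bar>g' x\<bar> * f (g x)) absolutely_integrable_on S \<and> integral S (\<lambda>x. \<bar>g' x\<bar> * f (g x)) = integral (g ` S) f"
      using cv by blast
    hence "((\<lambda>x. \<bar>g' x\<bar> * f (g x)) has_integral integral (g ` S) f) S"
      using set_lebesgue_integral_eq_integral(1) by (metis absolutely_integrable_on_def has_integral_integrable_integral)
    from nn_integral_has_integral_lebesgue[OF nn1 this] A show ?thesis
      by (simp add: ennreal_mult'')
  next
    case False
    show ?thesis
    proof (cases "(\<integral>\<^sup>+x. ennreal (indicator S x * (\<bar>g' x\<bar> * f (g x))) \<partial>lborel) < \<infinity>")
      case True
      note A = nn_integral_fin_has_integral[OF m1 nn1 True]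
      hence "f absolutely_integrable_on g ` S \<and> integral (g ` S) f = integral S (\<lambda>x. \<bar>g' x\<bar> * f (g x))"
        using cv by blast
      hence "(f has_integral integral S (\<lambda>x. \<bar>g' x\<bar> * f (g x))) (g ` S)"
        by (metis absolutely_integrable_on_def has_integral_integrable_integral)
      from nn_integral_has_integral_lebesgue[OF nn this] A False show ?thesis
        by simp
    next
      case False2: False
      have "\<not> (\<integral>\<^sup>+x. ennreal (indicator S x * (\<bar>g' x\<bar> * f (g x))) \<partial>lborel) < \<top>" using False2 by simp
      with False show ?thesis by (simp add: not_less top.extremum_unique)
    qed
  qed
qed

lemma gauss_full_nn: "(\<integral>\<^sup>+y. ennreal (indicator UNIV y * exp (- y\<^sup>2)) \<partial>lborel) = ennreal (sqrt pi)"
proof -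
  have "has_bochner_integral lborel (\<lambda>x::real. exp (-x\<^sup>2) * x^(2 * 0)) (sqrt pi * (fact (2 * 0) / (2 ^ (2 * 0) * fact 0)))"
    using has_bochner_integral_even_function[OF gaussian_moment_even_pos[where k=0]] by simp
  hence h: "has_bochner_integral lborel (\<lambda>x::real. exp (-x\<^sup>2)) (sqrt pi)" by simp
  have "(\<integral>\<^sup>+y. ennreal (exp (- y\<^sup>2)) \<partial>lborel) = ennreal (sqrt pi)"
    using h by (subst nn_integral_eq_integral) (auto simp: has_bochner_integral_iff)
  thus ?thesis by simp
qed

lemma cs_integral:
  fixes c :: real assumes c: "c > 0"
  shows "(\<integral>\<^sup>+x. ennreal (indicator {0<..} x * exp (- (x - c / x)\<^sup>2)) \<partial>lborel) = ennreal (sqrt pi / 2)"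
proof -
  let ?S = "{0<..} :: real set"
  let ?E = "\<lambda>x::real. exp (- (x - c / x)\<^sup>2)"
  have surj0: "y \<in> (\<lambda>x. x - c / x) ` ?S" for y
  proof -
    define s where "s = sqrt (y\<^sup>2 + 4 * c)"
    have s2: "s\<^sup>2 = y\<^sup>2 + 4 * c" using c by (simp add: s_def)
    have "sqrt (y\<^sup>2) < sqrt (y\<^sup>2 + 4 * c)" using c by (intro real_sqrt_less_mono) simp
    hence "s > \<bar>y\<bar>" by (simp add: s_def)
    define x where "x = (y + s) / 2"
    have x0: "x > 0" using \<open>s > \<bar>y\<bar>\<close> by (simp add: x_def)
    have "x * x - y * x = c" unfolding x_def using s2 by (simp add: field_simps power2_eq_square)
    hence "y = x - c / x" using x0 by (simp add: field_simps)
    thus ?thesis using x0 by (intro image_eqI[of _ _ x]) auto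
  qed
  hence surj: "(\<lambda>x. x - c / x) ` ?S = UNIV" by auto
  have inj1: "inj_on (\<lambda>x. x - c / x) ?S"
  proof (rule strict_mono_on_imp_inj_on, rule strict_mono_onI)
    fix r s :: real assume "r \<in> ?S" "s \<in> ?S" "r < s"
    hence "c / s < c / r" using c by (simp add: divide_strict_left_mono)
    thus "r - c / r < s - c / s" using \<open>r < s\<close> by simp
  qed
  have der1: "((\<lambda>x. x - c / x) has_field_derivative (1 + c / x\<^sup>2)) (at x within ?S)" if "x \<in> ?S" for x
    using that by (auto intro!: derivative_eq_intros simp: field_simps power2_eq_square)
  have B: "(\<integral>\<^sup>+x. ennreal (indicator ?S x * (\<bar>1 + c / x\<^sup>2\<bar> * exp (- (x - c / x)\<^sup>2))) \<partial>lborel) = ennreal (sqrt pi)"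
    using nn_subst[where S="?S" and g="\<lambda>x. x - c / x" and g'="\<lambda>x. 1 + c / x\<^sup>2" and f="\<lambda>y. exp (- y\<^sup>2)",
        OF _ der1 inj1] surj gauss_full_nn by simp
  have inj2: "inj_on (\<lambda>x. c / x) ?S" using c by (auto simp: inj_on_def field_simps)
  have surj2: "(\<lambda>x. c / x) ` ?S = ?S"
  proof
    show "(\<lambda>x. c / x) ` ?S \<subseteq> ?S" using c by auto
    show "?S \<subseteq> (\<lambda>x. c / x) ` ?S"
    proof
      fix y :: real assume "y \<in> ?S"
      thus "y \<in> (\<lambda>x. c / x) ` ?S" using c by (intro image_eqI[of _ _ "c / y"]) auto
    qed
  qed
  have der2: "((\<lambda>x. c / x) has_field_derivative (- c / x\<^sup>2)) (at x within ?S)" if "x \<in> ?S" for x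
    using that by (auto intro!: derivative_eq_intros simp: field_simps power2_eq_square)
  have C0: "(\<integral>\<^sup>+x. ennreal (indicator ?S x * (\<bar>- c / x\<^sup>2\<bar> * ?E (c / x))) \<partial>lborel)
      = (\<integral>\<^sup>+x. ennreal (indicator ?S x * ?E x) \<partial>lborel)"
    using nn_subst[where S="?S" and g="\<lambda>x. c / x" and g'="\<lambda>x. - c / x\<^sup>2" and f="?E", OF _ der2 inj2] surj2 by simp
  have C: "(\<integral>\<^sup>+x. ennreal (indicator ?S x * (c / x\<^sup>2 * ?E x)) \<partial>lborel)
      = (\<integral>\<^sup>+x. ennreal (indicator ?S x * ?E x) \<partial>lborel)"
  proof -
    have "indicator ?S x * (\<bar>- c / x\<^sup>2\<bar> * ?E (c / x)) = indicator ?S x * (c / x\<^sup>2 * ?E x)" for x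
    proof (cases "x > 0")
      case True
      have "(c / x - x)\<^sup>2 = (x - c / x)\<^sup>2" by (rule power2_commute)
      thus ?thesis using True c by simp
    qed simp
    hence "(\<integral>\<^sup>+x. ennreal (indicator ?S x * (c / x\<^sup>2 * ?E x)) \<partial>lborel) = (\<integral>\<^sup>+x. ennreal (indicator ?S x * (\<bar>- c / x\<^sup>2\<bar> * ?E (c / x))) \<partial>lborel)"
      by (intro nn_integral_cong) (simp only:)
    thus ?thesis using C0 by (rule trans)
  qed
  have "(\<integral>\<^sup>+x. ennreal (indicator ?S x * (\<bar>1 + c / x\<^sup>2\<bar> * ?E x)) \<partial>lborel)
      = (\<integral>\<^sup>+x. ennreal (indicator ?S x * ?E x) + ennreal (indicator ?S x * (c / x\<^sup>2 * ?E x)) \<partial>lborel)"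
  proof (rule nn_integral_cong)
    fix x :: real
    show "ennreal (indicator ?S x * (\<bar>1 + c / x\<^sup>2\<bar> * ?E x)) = ennreal (indicator ?S x * ?E x) + ennreal (indicator ?S x * (c / x\<^sup>2 * ?E x))"
      using c by (cases "x > 0") (simp_all add: ennreal_plus[symmetric] ring_distribs del: ennreal_plus)
  qed
  also have "\<dots> = (\<integral>\<^sup>+x. ennreal (indicator ?S x * ?E x) \<partial>lborel) + (\<integral>\<^sup>+x. ennreal (indicator ?S x * (c / x\<^sup>2 * ?E x)) \<partial>lborel)"
    by (rule nn_integral_add) auto
  finally have "2 * (\<integral>\<^sup>+x. ennreal (indicator ?S x * ?E x) \<partial>lborel) = ennreal (sqrt pi)"
    using B C by (simp add: mult_2)
  moreover have "ennreal (sqrt pi) = 2 * ennreal (sqrt pi / 2)"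
    using ennreal_mult[of 2 "sqrt pi / 2"] by simp
  ultimately have "2 * (\<integral>\<^sup>+x. ennreal (indicator ?S x * ?E x) \<partial>lborel) = 2 * ennreal (sqrt pi / 2)" by simp
  thus ?thesis using ennreal_mult_cancel_left[of 2] by simp
qed
lemma exp_cs:
  fixes c :: real assumes c: "c \<ge> 0"
  shows "(\<integral>\<^sup>+x. ennreal (indicator {0<..} x * exp (- x\<^sup>2 - c\<^sup>2 / x\<^sup>2)) \<partial>lborel) = ennreal (sqrt pi / 2 * exp (- 2 * c))"
proof (cases "c = 0")
  case True
  have "(\<integral>\<^sup>+x. ennreal (indicator {0<..} x * exp (- x\<^sup>2 - c\<^sup>2 / x\<^sup>2)) \<partial>lborel)
      = (\<integral>\<^sup>+x. ennreal (indicator {0..} x *\<^sub>R exp (- x\<^sup>2)) \<partial>lborel)"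
  proof (rule nn_integral_cong_AE)
    show "AE x in lborel. ennreal (indicator {0<..} x * exp (- x\<^sup>2 - c\<^sup>2 / x\<^sup>2)) = ennreal (indicator {0..} x *\<^sub>R exp (- x\<^sup>2))"
      using AE_lborel_singleton[of 0] by eventually_elim (auto simp: True indicator_def)
  qed
  also have "\<dots> = ennreal (sqrt pi / 2)"
    using gaussian_moment_0 by (subst nn_integral_eq_integral) (auto simp: has_bochner_integral_iff)
  finally show ?thesis using True by simp
next
  case False
  hence c0: "c > 0" using c by simp
  have "(\<integral>\<^sup>+x. ennreal (indicator {0<..} x * exp (- x\<^sup>2 - c\<^sup>2 / x\<^sup>2)) \<partial>lborel)
      = (\<integral>\<^sup>+x. ennreal (exp (- 2 * c)) * ennreal (indicator {0<..} x * exp (- (x - c / x)\<^sup>2)) \<partial>lborel)"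
  proof (rule nn_integral_cong)
    fix x :: real
    show "ennreal (indicator {0<..} x * exp (- x\<^sup>2 - c\<^sup>2 / x\<^sup>2)) = ennreal (exp (- 2 * c)) * ennreal (indicator {0<..} x * exp (- (x - c / x)\<^sup>2))"
    proof (cases "x > 0")
      case True
      have "- x\<^sup>2 - c\<^sup>2 / x\<^sup>2 = - 2 * c + - (x - c / x)\<^sup>2"
        using True by (simp add: power2_eq_square field_simps)
      hence "exp (- x\<^sup>2 - c\<^sup>2 / x\<^sup>2) = exp (- 2 * c) * exp (- (x - c / x)\<^sup>2)"
        by (simp add: exp_add[symmetric])
      thus ?thesis using True by (simp add: ennreal_mult[symmetric])
    qed simp
  qed
  also have "\<dots> = ennreal (exp (- 2 * c)) * ennreal (sqrt pi / 2)"
    by (subst nn_integral_cmult) (auto simp: cs_integral[OF c0])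
  finally show ?thesis by (simp add: ennreal_mult[symmetric] mult.commute)
qed

lemma subordination:
  fixes \<tau> r :: real assumes \<tau>: "\<tau> > 0" and r: "r \<ge> 0"
  shows "(\<integral>\<^sup>+\<sigma>. ennreal (indicator {0<..} \<sigma> * (\<tau> / (2 * sqrt pi) / (\<sigma> * sqrt \<sigma>) * exp (- \<tau>\<^sup>2 / (4 * \<sigma>)) * exp (- \<sigma> * r\<^sup>2))) \<partial>lborel)
       = ennreal (exp (- \<tau> * r))"
proof -
  let ?S = "{0<..} :: real set"
  let ?F = "\<lambda>\<sigma>. \<tau> / (2 * sqrt pi) / (\<sigma> * sqrt \<sigma>) * exp (- \<tau>\<^sup>2 / (4 * \<sigma>)) * exp (- \<sigma> * r\<^sup>2)"
  let ?g = "\<lambda>x. \<tau>\<^sup>2 / (4 * x\<^sup>2)"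
  let ?g' = "\<lambda>x. - \<tau>\<^sup>2 / (2 * x ^ 3)"
  define c where "c = \<tau> * r / 2"
  have c: "c \<ge> 0" using \<tau> r by (simp add: c_def)
  have inj: "inj_on ?g ?S"
  proof (rule inj_onI)
    fix x y :: real assume "x \<in> ?S" "y \<in> ?S" "?g x = ?g y"
    hence "x\<^sup>2 = y\<^sup>2" using \<tau> by (simp add: field_simps)
    thus "x = y" using \<open>x \<in> ?S\<close> \<open>y \<in> ?S\<close> by (simp add: power2_eq_iff)
  qed
  have surj: "?g ` ?S = ?S"
  proof
    show "?g ` ?S \<subseteq> ?S" using \<tau> by auto
    show "?S \<subseteq> ?g ` ?S"
    proof
      fix y :: real assume y: "y \<in> ?S"
      define x where "x = \<tau> / (2 * sqrt y)"
      have "x > 0" using y \<tau> by (simp add: x_def)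
      moreover have "?g x = y" using y \<tau> by (simp add: x_def power_divide power_mult_distrib)
      ultimately show "y \<in> ?g ` ?S" by (intro image_eqI[of _ _ x]) auto
    qed
  qed
  have der: "(?g has_field_derivative ?g' x) (at x within ?S)" if "x \<in> ?S" for x
    using that by (auto intro!: derivative_eq_intros simp: field_simps power2_eq_square power3_eq_cube)
  have key: "indicator ?S x * (\<bar>?g' x\<bar> * ?F (?g x)) = (2 / sqrt pi) * (indicator ?S x * exp (- x\<^sup>2 - c\<^sup>2 / x\<^sup>2))" for x
  proof (cases "x > 0")
    case True
    have sq: "sqrt (?g x) = \<tau> / (2 * x)"
      using True \<tau> by (simp add: real_sqrt_divide real_sqrt_mult)
    have e1: "- \<tau>\<^sup>2 / (4 * ?g x) = - x\<^sup>2" using True \<tau> by (simp add: field_simps)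
    have e2: "- ?g x * r\<^sup>2 = - c\<^sup>2 / x\<^sup>2" using True \<tau> by (simp add: c_def field_simps power_mult_distrib)
    have e3: "\<bar>?g' x\<bar> * (\<tau> / (2 * sqrt pi) / (?g x * sqrt (?g x))) = 2 / sqrt pi"
      unfolding sq using True \<tau> by (simp add: field_simps power2_eq_square power3_eq_cube)
    have "\<bar>?g' x\<bar> * ?F (?g x) = (\<bar>?g' x\<bar> * (\<tau> / (2 * sqrt pi) / (?g x * sqrt (?g x)))) * exp (- \<tau>\<^sup>2 / (4 * ?g x)) * exp (- ?g x * r\<^sup>2)"
      by (simp only: mult.assoc)
    also have "\<dots> = 2 / sqrt pi * exp (- x\<^sup>2 - c\<^sup>2 / x\<^sup>2)"
      unfolding e1 e2 e3 by (simp add: exp_diff exp_minus field_simps)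
    finally show ?thesis using True by simp
  qed simp
  have "(\<integral>\<^sup>+\<sigma>. ennreal (indicator ?S \<sigma> * ?F \<sigma>) \<partial>lborel) = (\<integral>\<^sup>+x. ennreal (indicator ?S x * (\<bar>?g' x\<bar> * ?F (?g x))) \<partial>lborel)"
    using nn_subst[where S="?S" and g="?g" and g'="?g'" and f="?F", OF _ der inj] surj \<tau> by simp
  also have "\<dots> = (\<integral>\<^sup>+x. ennreal (2 / sqrt pi) * ennreal (indicator ?S x * exp (- x\<^sup>2 - c\<^sup>2 / x\<^sup>2)) \<partial>lborel)"
    unfolding key by (intro nn_integral_cong) (simp add: ennreal_mult[symmetric])
  also have "\<dots> = ennreal (2 / sqrt pi) * ennreal (sqrt pi / 2 * exp (- 2 * c))"
    by (subst nn_integral_cmult) (auto simp: exp_cs[OF c])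
  also have "\<dots> = ennreal (exp (- \<tau> * r))"
    by (simp add: ennreal_mult[symmetric] c_def)
  finally show ?thesis .
qed

definition gk :: "real \<Rightarrow> real^2 \<Rightarrow> real" where
  "gk t z = exp (- (norm z)\<^sup>2 / (4 * t)) / (4 * pi * t)"

lemma gk_nonneg: "t > 0 \<Longrightarrow> gk t z \<ge> 0"
  by (simp add: gk_def)

lemma gk_measurable[measurable]:
  assumes [measurable]: "f \<in> borel_measurable M" "g \<in> borel_measurable M"
  shows "(\<lambda>x. gk (f x) (g x)) \<in> borel_measurable M"
  unfolding gk_def by measurable

lemma gk_measurable'[measurable]: "gk t \<in> borel_measurable borel"
  using gk_measurable[of "\<lambda>_. t" borel "\<lambda>x. x"] by simp

lemma gk_le: "t > 0 \<Longrightarrow> gk t z \<le> 1 / (4 * pi * t)"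
  by (simp add: gk_def divide_right_mono)

lemma gk_basic:
  assumes t: "t > 0"
  shows "integrable lborel (gk t)" "(\<integral>z. gk t z \<partial>lborel) = 1"
proof -
  have v: "1 / (4 * t) > 0" using t by simp
  note G = gauss_ft[OF v, where z="0::real^2"]
  have e: "exp (- (1 / (4 * t)) * (norm k)\<^sup>2) = (4 * pi * t) * gk t k" for k :: "real^2"
    using t by (simp add: gk_def)
  have "integrable lborel (\<lambda>k::real^2. complex_of_real ((4 * pi * t) * gk t k))"
    using G(1) unfolding e by simp
  hence "integrable lborel (\<lambda>k::real^2. (4 * pi * t) * gk t k)"
    by (simp only: complex_of_real_integrable_eq)
  hence "integrable lborel (\<lambda>k::real^2. (1 / (4 * pi * t)) * ((4 * pi * t) * gk t k))"
    by (rule integrable_mult_right)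
  thus i: "integrable lborel (gk t)" using t by simp
  have "complex_of_real (\<integral>k. (4 * pi * t) * gk t k \<partial>lborel) = complex_of_real (sqrt (pi / (1 / (4 * t))) ^ 2)"
    using G(2) unfolding e by (simp add: DIM_cart)
  hence "(\<integral>k. (4 * pi * t) * gk t k \<partial>lborel) = 4 * pi * t"
    using t by (simp only: of_real_eq_iff) simp
  thus "(\<integral>z. gk t z \<partial>lborel) = 1" using t by simp
qed

lemma gk_shift:
  fixes g :: "real^2 \<Rightarrow> real"
  assumes t: "t > 0"
  shows "integrable lborel (\<lambda>y. gk t (x - y))" "(\<integral>y. gk t (x - y) \<partial>lborel) = 1"
    "(\<integral>\<^sup>+y. ennreal (gk t (x - y)) \<partial>lborel) = 1"
proof -
  have eq: "gk t (x - y) = gk t ((- x) + y)" for y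
    by (simp add: gk_def norm_minus_commute)
  have d: "distr lborel borel ((+) (- x)) = (lborel :: (real^2) measure)" by (rule lborel_distr_plus)
  have "integrable (distr lborel borel ((+) (- x))) (gk t)" unfolding d using gk_basic[OF t] by simp
  hence "integrable lborel (\<lambda>y. gk t ((- x) + y))" by (subst (asm) integrable_distr_eq) auto
  thus i: "integrable lborel (\<lambda>y. gk t (x - y))" unfolding eq .
  have "(\<integral>y. gk t ((- x) + y) \<partial>lborel) = (\<integral>y. gk t y \<partial>distr lborel borel ((+) (- x)))"
    by (subst integral_distr) auto
  also have "\<dots> = 1" unfolding d using gk_basic[OF t] by simp
  finally show 1: "(\<integral>y. gk t (x - y) \<partial>lborel) = 1" unfolding eq .
  show "(\<integral>\<^sup>+y. ennreal (gk t (x - y)) \<partial>lborel) = 1"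
    using nn_integral_eq_integral[OF i] 1 gk_nonneg[OF t] by simp
qed

lemma gauss_integrable2: "t > 0 \<Longrightarrow> integrable lborel (\<lambda>k::real^2. exp (- t * (norm k)\<^sup>2))"
  using gauss_ft(1)[of t "0::real^2"] by (simp add: complex_of_real_integrable_eq)

lemma heat_rep:
  fixes f :: "real^2 \<Rightarrow> complex" and x :: "real^2"
  assumes t: "t > 0" and fi: "integrable lborel f"
  shows "complex_of_real (1 / (2 * pi)\<^sup>2) * (\<integral>k. exp (\<i> * complex_of_real (k \<bullet> x)) * complex_of_real (exp (- t * (norm k)\<^sup>2)) * fourier2 f k \<partial>lborel)
       = (\<integral>y. complex_of_real (gk t (x - y)) * f y \<partial>lborel)"
proof -
  have fm[measurable]: "f \<in> borel_measurable lborel" using fi by (rule borel_measurable_integrable)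
  define H where "H k y = exp (\<i> * complex_of_real (k \<bullet> x)) * complex_of_real (exp (- t * (norm k)\<^sup>2)) * (exp (- \<i> * complex_of_real (k \<bullet> y)) * f y)" for k y :: "real^2"
  have H_alt: "H k y = (exp (\<i> * complex_of_real (k \<bullet> (x - y))) * complex_of_real (exp (- t * (norm k)\<^sup>2))) * f y" for k y
  proof -
    have "exp (\<i> * complex_of_real (k \<bullet> x)) * exp (- \<i> * complex_of_real (k \<bullet> y)) = exp (\<i> * complex_of_real (k \<bullet> (x - y)))"
      by (simp add: exp_add[symmetric] inner_diff_right algebra_simps)
    thus ?thesis unfolding H_def by (metis (no_types, lifting) mult.assoc mult.commute)
  qed
  have Hm[measurable]: "(\<lambda>(k, y). H k y) \<in> borel_measurable (lborel \<Otimes>\<^sub>M lborel)"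
    unfolding H_def by measurable
  have normH: "norm (H k y) = exp (- t * (norm k)\<^sup>2) * norm (f y)" for k y
    unfolding H_alt by (simp add: norm_mult)
  have int: "integrable (lborel \<Otimes>\<^sub>M lborel) (\<lambda>(k, y). H k y)"
  proof (rule lborel_pair.Fubini_integrable)
    show "integrable lborel (\<lambda>k. \<integral>y. norm ((\<lambda>(k, y). H k y) (k, y)) \<partial>lborel)"
      using integrable_mult_left[OF gauss_integrable2[OF t], of "\<integral>y. norm (f y) \<partial>lborel"] by (simp add: normH)
    show "AE k in lborel. integrable lborel (\<lambda>y. (\<lambda>(k, y). H k y) (k, y))"
    proof (rule AE_I2)
      fix k :: "real^2"
      have "integrable lborel (\<lambda>y. exp (- \<i> * complex_of_real (k \<bullet> y)) * f y)"
        by (rule Bochner_Integration.integrable_bound[OF fi]) (auto simp: norm_mult)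
      thus "integrable lborel (\<lambda>y. (\<lambda>(k, y). H k y) (k, y))"
        unfolding H_def by (simp add: integrable_mult_right)
    qed
  qed simp
  have e1: "(\<integral>y. H k y \<partial>lborel) = exp (\<i> * complex_of_real (k \<bullet> x)) * complex_of_real (exp (- t * (norm k)\<^sup>2)) * fourier2 f k" for k
    unfolding H_def fourier2_def by simp
  have e2: "(\<integral>k. H k y \<partial>lborel) = complex_of_real (pi / t * exp (- (norm (x - y))\<^sup>2 / (4 * t))) * f y" for y
  proof -
    have "(\<integral>k. H k y \<partial>lborel) = (\<integral>k. exp (\<i> * complex_of_real (k \<bullet> (x - y))) * complex_of_real (exp (- t * (norm k)\<^sup>2)) \<partial>lborel) * f y"
      unfolding H_alt by simp
    also have "\<dots> = complex_of_real (sqrt (pi / t) ^ DIM(real^2) * exp (- (norm (x - y))\<^sup>2 / (4 * t))) * f y"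
      by (subst gauss_ft(2)[OF t]) rule
    also have "sqrt (pi / t) ^ DIM(real^2) = pi / t" using t by (simp add: DIM_cart)
    finally show ?thesis .
  qed
  have "(\<integral>k. exp (\<i> * complex_of_real (k \<bullet> x)) * complex_of_real (exp (- t * (norm k)\<^sup>2)) * fourier2 f k \<partial>lborel)
      = (\<integral>k. (\<integral>y. H k y \<partial>lborel) \<partial>lborel)" unfolding e1 ..
  also have "\<dots> = (\<integral>y. (\<integral>k. H k y \<partial>lborel) \<partial>lborel)"
    using lborel_pair.Fubini_integral[of "\<lambda>k y. H k y"] int by simp
  also have "\<dots> = (\<integral>y. complex_of_real (pi / t * exp (- (norm (x - y))\<^sup>2 / (4 * t))) * f y \<partial>lborel)"
    unfolding e2 ..
  finally have "complex_of_real (1 / (2 * pi)\<^sup>2) * (\<integral>k. exp (\<i> * complex_of_real (k \<bullet> x)) * complex_of_real (exp (- t * (norm k)\<^sup>2)) * fourier2 f k \<partial>lborel)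
     = (\<integral>y. complex_of_real (1 / (2 * pi)\<^sup>2) * (complex_of_real (pi / t * exp (- (norm (x - y))\<^sup>2 / (4 * t))) * f y) \<partial>lborel)"
    by simp
  also have "\<dots> = (\<integral>y. complex_of_real (gk t (x - y)) * f y \<partial>lborel)"
  proof (rule Bochner_Integration.integral_cong[OF refl])
    fix y
    have "1 / (2 * pi)\<^sup>2 * (pi / t * exp (- (norm (x - y))\<^sup>2 / (4 * t))) = gk t (x - y)"
      using t by (simp add: gk_def power2_eq_square field_simps)
    thus "complex_of_real (1 / (2 * pi)\<^sup>2) * (complex_of_real (pi / t * exp (- (norm (x - y))\<^sup>2 / (4 * t))) * f y) = complex_of_real (gk t (x - y)) * f y"
      by (metis mult.assoc of_real_mult)
  qed
  finally show ?thesis .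
qed

lemma cc_facts:
  fixes f :: "real^2 \<Rightarrow> complex"
  assumes cont: "continuous_on UNIV f" and cpt: "compact (closure {x. f x \<noteq> 0})"
  shows "f \<in> borel_measurable borel"
    and "\<exists>B\<ge>0. \<forall>y. norm (f y) \<le> B"
    and "integrable lborel f"
    and "\<And>p. p > 0 \<Longrightarrow> integrable lborel (\<lambda>y. norm (f y) powr p)"
proof -
  let ?K = "closure {x. f x \<noteq> 0}"
  show fm: "f \<in> borel_measurable borel" using cont by (rule borel_measurable_continuous_onI)
  have "compact (f ` ?K)" using cpt cont by (intro compact_continuous_image) (auto intro: continuous_on_subset)
  then obtain B0 where B0: "\<And>z. z \<in> f ` ?K \<Longrightarrow> norm z \<le> B0" using compact_imp_bounded bounded_iff by metis
  define B where "B = max B0 0"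
  have B: "norm (f y) \<le> B" for y
  proof (cases "y \<in> ?K")
    case True thus ?thesis using B0[of "f y"] by (auto simp: B_def)
  next
    case False
    hence "f y = 0" by (metis (mono_tags) closure_subset mem_Collect_eq subsetD)
    thus ?thesis by (simp add: B_def)
  qed
  have B0': "B \<ge> 0" by (simp add: B_def)
  show "\<exists>B\<ge>0. \<forall>y. norm (f y) \<le> B" using B B0' by blast
  have Kfin: "emeasure lborel ?K < \<infinity>" using cpt by (intro emeasure_bounded_finite compact_imp_bounded)
  have Ks: "?K \<in> sets lborel" by simp
  have supp: "y \<notin> ?K \<Longrightarrow> f y = 0" for y by (metis (mono_tags) closure_subset mem_Collect_eq subsetD)
  show "integrable lborel f"
  proof (rule Bochner_Integration.integrable_bound[where f="\<lambda>y. indicator ?K y *\<^sub>R B"])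
    show "integrable lborel (\<lambda>y. indicator ?K y *\<^sub>R B)" by (rule integrable_indicator[OF Ks Kfin])
    show "f \<in> borel_measurable lborel" using fm by simp
    show "AE y in lborel. norm (f y) \<le> norm (indicator ?K y *\<^sub>R B)"
    proof (rule AE_I2)
      fix y
      show "norm (f y) \<le> norm (indicator ?K y *\<^sub>R B)"
      proof (cases "y \<in> ?K")
        case True thus ?thesis using B[of y] B0' by simp
      next
        case False thus ?thesis using supp[of y] by simp
      qed
    qed
  qed
  fix p :: real assume p: "p > 0"
  show "integrable lborel (\<lambda>y. norm (f y) powr p)"
  proof (rule Bochner_Integration.integrable_bound[where f="\<lambda>y. indicator ?K y *\<^sub>R (B powr p)"])
    show "integrable lborel (\<lambda>y. indicator ?K y *\<^sub>R (B powr p))" by (rule integrable_indicator[OF Ks Kfin])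
    show "(\<lambda>y. norm (f y) powr p) \<in> borel_measurable lborel" using fm by simp
    show "AE y in lborel. norm (norm (f y) powr p) \<le> norm (indicator ?K y *\<^sub>R (B powr p))"
    proof (rule AE_I2)
      fix y
      show "norm (norm (f y) powr p) \<le> norm (indicator ?K y *\<^sub>R (B powr p))"
      proof (cases "y \<in> ?K")
        case True thus ?thesis using B[of y] p by (simp add: powr_mono2)
      next
        case False thus ?thesis using supp[of y] by simp
      qed
    qed
  qed
qed

lemma (in prob_space) jensen_powr:
  fixes h :: "'a \<Rightarrow> real"
  assumes hm: "h \<in> borel_measurable M" and h0: "\<And>x. x \<in> space M \<Longrightarrow> 0 \<le> h x"
    and hB: "\<And>x. x \<in> space M \<Longrightarrow> h x \<le> B" and p: "p \<ge> 1"
  shows "(\<integral>x. h x \<partial>M) powr p \<le> (\<integral>x. h x powr p \<partial>M)"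
proof -
  have ih: "integrable M h"
    by (rule integrable_const_bound[where B=B]) (use h0 hB hm in auto)
  have ihp: "integrable M (\<lambda>x. h x powr p)"
    by (rule integrable_const_bound[where B="B powr p"]) (use h0 hB hm p in \<open>auto intro!: powr_mono2\<close>)
  define a where "a = (\<integral>x. h x \<partial>M)"
  have a0: "a \<ge> 0" unfolding a_def using h0 by (intro integral_nonneg_AE) auto
  show ?thesis
  proof (cases "a = 0")
    case True
    thus ?thesis using p h0 unfolding a_def[symmetric] by (auto intro!: integral_nonneg_AE)
  next
    case False
    hence apos: "a > 0" using a0 by simp
    have tangent: "s powr p \<ge> a powr p + p * a powr (p - 1) * (s - a)" if s: "s \<ge> 0" for s
    proof (cases "s = 0")
      case True
      have "a powr p + p * a powr (p - 1) * (0 - a) = a powr p * (1 - p)"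
        using apos by (simp add: powr_diff field_simps)
      also have "\<dots> \<le> 0" using p apos by (simp add: mult_nonneg_nonpos)
      finally show ?thesis using True p by simp
    next
      case False
      hence "s > 0" using s by simp
      have "(\<lambda>x. x powr p) s - (\<lambda>x. x powr p) a \<ge> (p * a powr (p - 1)) * (s - a)"
      proof (rule convex_on_imp_above_tangent[OF powr_convex[OF p]])
        show "connected ({0<..} :: real set)" by simp
        show "a \<in> interior {0<..}" using apos by (simp add: interior_open)
        show "s \<in> {0<..}" using \<open>s > 0\<close> by simp
        show "((\<lambda>x. x powr p) has_field_derivative p * a powr (p - 1)) (at a within {0<..})"
          using apos by (auto intro!: derivative_eq_intros)
      qed
      thus ?thesis by simp
    qed
    have "(\<integral>x. a powr p + p * a powr (p - 1) * (h x - a) \<partial>M) \<le> (\<integral>x. h x powr p \<partial>M)"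
      using tangent h0 ih ihp by (intro integral_mono) auto
    moreover have "(\<integral>x. a powr p + p * a powr (p - 1) * (h x - a) \<partial>M) = a powr p"
      using ih prob_space by (simp add: a_def algebra_simps)
    ultimately show ?thesis by (simp add: a_def)
  qed
qed

lemma fourier2_measurable[measurable]:
  assumes [measurable]: "f \<in> borel_measurable borel"
  shows "fourier2 f \<in> borel_measurable borel"
  unfolding fourier2_def[abs_def] by measurable

lemma cont_le_esssup:
  fixes f :: "real^2 \<Rightarrow> complex"
  assumes cont: "continuous_on UNIV f"
  shows "ennreal (norm (f y)) \<le> esssup lborel (\<lambda>y. ennreal (norm (f y)))"
proof (rule ccontr)
  let ?E = "esssup lborel (\<lambda>y. ennreal (norm (f y)))"
  assume "\<not> ennreal (norm (f y)) \<le> ?E"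
  hence lt: "?E < ennreal (norm (f y))" by simp
  then obtain s where s: "?E = ennreal s" "s \<ge> 0" by (cases ?E) (auto simp: top_unique)
  have sl: "s < norm (f y)" using lt s by (simp add: ennreal_less_iff)
  have fm[measurable]: "f \<in> borel_measurable borel" using cont by (rule borel_measurable_continuous_onI)
  have AE: "AE z in lborel. norm (f z) \<le> s"
    using esssup_AE[of "\<lambda>y. ennreal (norm (f y))" lborel] s by (auto elim!: eventually_mono)
  let ?U = "{z. s < norm (f z)}"
  have "open ?U" using cont by (intro open_Collect_less continuous_intros) auto
  moreover have "y \<in> ?U" using sl by simp
  ultimately obtain r where r: "r > 0" "ball y r \<subseteq> ?U" using open_contains_ball by blast
  have meas: "{z \<in> space lborel. \<not> norm (f z) \<le> s} \<in> sets lborel" by measurable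
  have "emeasure lborel {z \<in> space lborel. \<not> norm (f z) \<le> s} = 0"
    using AE by (subst (asm) AE_iff_measurable[OF meas refl])
  moreover have "ball y r \<subseteq> {z \<in> space lborel. \<not> norm (f z) \<le> s}" using r by auto
  hence "emeasure lborel (ball y r) \<le> emeasure lborel {z \<in> space lborel. \<not> norm (f z) \<le> s}"
    using meas by (rule emeasure_mono)
  ultimately have "emeasure lborel (ball y r) = 0" by simp
  hence "measure lborel (ball y r) = 0" by (simp add: measure_def)
  moreover have "measure lborel (ball y r) > 0" using content_ball_gt_0_iff[of y r] r by simp
  ultimately show False by simp
qed
lemma mult_rep:
  fixes N :: "'w measure" and T :: "'w \<Rightarrow> real" and m :: "real^2 \<Rightarrow> real" and f :: "real^2 \<Rightarrow> complex"
  assumes N: "prob_space N" and Tm[measurable]: "T \<in> borel_measurable N" and Tpos: "\<And>\<omega>. \<omega> \<in> space N \<Longrightarrow> T \<omega> > 0"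
    and mrep: "\<And>k. m k = (\<integral>\<omega>. exp (- T \<omega> * (norm k)\<^sup>2) \<partial>N)"
    and fi: "integrable lborel f"
    and int: "integrable lborel (\<lambda>k. complex_of_real (m k) * fourier2 f k)"
  shows "fourier_multiplier2 m f x = (\<integral>\<omega>. (\<integral>y. complex_of_real (gk (T \<omega>) (x - y)) * f y \<partial>lborel) \<partial>N)"
proof -
  interpret N: prob_space N by (rule N)
  interpret P: pair_sigma_finite "lborel :: (real^2) measure" N
    by (intro pair_sigma_finite.intro sigma_finite_lborel N.sigma_finite_measure_axioms)
  have fm[measurable]: "f \<in> borel_measurable borel" using borel_measurable_integrable[OF fi] by simp
  define \<Phi> where "\<Phi> k \<omega> = exp (\<i> * complex_of_real (k \<bullet> x)) * complex_of_real (exp (- T \<omega> * (norm k)\<^sup>2)) * fourier2 f k"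
    for k :: "real^2" and \<omega>
  have \<Phi>m[measurable]: "(\<lambda>(k, \<omega>). \<Phi> k \<omega>) \<in> borel_measurable (lborel \<Otimes>\<^sub>M N)"
    unfolding \<Phi>_def by measurable
  have norm\<Phi>: "norm (\<Phi> k \<omega>) = exp (- T \<omega> * (norm k)\<^sup>2) * norm (fourier2 f k)" for k \<omega>
    by (simp add: \<Phi>_def norm_mult)
  have m0: "m k \<ge> 0" for k unfolding mrep by (intro integral_nonneg_AE) auto
  have int\<Phi>: "integrable (lborel \<Otimes>\<^sub>M N) (\<lambda>(k, \<omega>). \<Phi> k \<omega>)"
  proof (rule P.Fubini_integrable)
    have "integrable lborel (\<lambda>k. norm (complex_of_real (m k) * fourier2 f k))"
      using int by (rule integrable_norm)
    moreover have "norm (complex_of_real (m k) * fourier2 f k) = (\<integral>\<omega>. norm ((\<lambda>(k, \<omega>). \<Phi> k \<omega>) (k, \<omega>)) \<partial>N)" for k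
      using m0[of k] by (simp add: norm_mult mrep norm\<Phi>)
    ultimately show "integrable lborel (\<lambda>k. \<integral>\<omega>. norm ((\<lambda>(k, \<omega>). \<Phi> k \<omega>) (k, \<omega>)) \<partial>N)" by simp
    show "AE k in lborel. integrable N (\<lambda>\<omega>. (\<lambda>(k, \<omega>). \<Phi> k \<omega>) (k, \<omega>))"
    proof (rule AE_I2)
      fix k :: "real^2"
      show "integrable N (\<lambda>\<omega>. (\<lambda>(k, \<omega>). \<Phi> k \<omega>) (k, \<omega>))"
      proof (rule N.integrable_const_bound[where B="norm (fourier2 f k)"])
        show "AE \<omega> in N. norm ((\<lambda>(k, \<omega>). \<Phi> k \<omega>) (k, \<omega>)) \<le> norm (fourier2 f k)"
        proof (rule AE_I2)
          fix \<omega> assume "\<omega> \<in> space N"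
          hence "exp (- T \<omega> * (norm k)\<^sup>2) \<le> 1" using Tpos[of \<omega>] by (simp add: mult_nonneg_nonneg)
          thus "norm ((\<lambda>(k, \<omega>). \<Phi> k \<omega>) (k, \<omega>)) \<le> norm (fourier2 f k)"
            unfolding norm\<Phi> case_prod_conv by (simp add: mult_left_le_one_le)
        qed
        show "(\<lambda>\<omega>. (\<lambda>(k, \<omega>). \<Phi> k \<omega>) (k, \<omega>)) \<in> borel_measurable N"
          by (rule measurable_Pair2[OF \<Phi>m]) simp
      qed
    qed
  qed simp
  have e1: "exp (\<i> * complex_of_real (k \<bullet> x)) * complex_of_real (m k) * fourier2 f k = (\<integral>\<omega>. \<Phi> k \<omega> \<partial>N)" for k
    unfolding \<Phi>_def mrep by simp
  have "(\<integral>k. exp (\<i> * complex_of_real (k \<bullet> x)) * complex_of_real (m k) * fourier2 f k \<partial>lborel)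
      = (\<integral>k. (\<integral>\<omega>. \<Phi> k \<omega> \<partial>N) \<partial>lborel)" unfolding e1 ..
  also have "\<dots> = (\<integral>\<omega>. (\<integral>k. \<Phi> k \<omega> \<partial>lborel) \<partial>N)"
    using P.Fubini_integral[of \<Phi>] int\<Phi> by simp
  finally have "fourier_multiplier2 m f x = complex_of_real (1 / (2 * pi)\<^sup>2) * (\<integral>\<omega>. (\<integral>k. \<Phi> k \<omega> \<partial>lborel) \<partial>N)"
    unfolding fourier_multiplier2_def by simp
  also have "\<dots> = (\<integral>\<omega>. complex_of_real (1 / (2 * pi)\<^sup>2) * (\<integral>k. \<Phi> k \<omega> \<partial>lborel) \<partial>N)"
    by simp
  also have "\<dots> = (\<integral>\<omega>. (\<integral>y. complex_of_real (gk (T \<omega>) (x - y)) * f y \<partial>lborel) \<partial>N)"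
  proof (rule Bochner_Integration.integral_cong[OF refl])
    fix \<omega> assume "\<omega> \<in> space N"
    thus "complex_of_real (1 / (2 * pi)\<^sup>2) * (\<integral>k. \<Phi> k \<omega> \<partial>lborel) = (\<integral>y. complex_of_real (gk (T \<omega>) (x - y)) * f y \<partial>lborel)"
      unfolding \<Phi>_def using heat_rep[OF Tpos fi, of \<omega> x] by simp
  qed
  finally show ?thesis .
qed

lemma gk_avg:
  fixes h :: "real^2 \<Rightarrow> real" and x :: "real^2"
  assumes t: "t > 0" and hm[measurable]: "h \<in> borel_measurable borel"
    and h0: "\<And>y. 0 \<le> h y" and hB: "\<And>y. h y \<le> B"
  shows "integrable lborel (\<lambda>y. gk t (x - y) * h y)"
    and "0 \<le> (\<integral>y. gk t (x - y) * h y \<partial>lborel)"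
    and "(\<integral>y. gk t (x - y) * h y \<partial>lborel) \<le> B"
    and "\<And>q. q \<ge> 1 \<Longrightarrow> (\<integral>y. gk t (x - y) * h y \<partial>lborel) powr q \<le> (\<integral>y. gk t (x - y) * h y powr q \<partial>lborel)"
proof -
  note G = gk_shift[OF t, of x]
  have B0: "B \<ge> 0" using h0[of 0] hB[of 0] by simp
  show i: "integrable lborel (\<lambda>y. gk t (x - y) * h y)"
  proof (rule Bochner_Integration.integrable_bound[where f="\<lambda>y. gk t (x - y) * B"])
    show "integrable lborel (\<lambda>y. gk t (x - y) * B)" using G(1) by (rule integrable_mult_left)
    show "AE y in lborel. norm (gk t (x - y) * h y) \<le> norm (gk t (x - y) * B)"
      using gk_nonneg[OF t] h0 hB B0 by (auto intro!: mult_left_mono simp: abs_mult)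
  qed simp
  show "0 \<le> (\<integral>y. gk t (x - y) * h y \<partial>lborel)"
    using gk_nonneg[OF t] h0 by (intro integral_nonneg_AE) auto
  have "(\<integral>y. gk t (x - y) * h y \<partial>lborel) \<le> (\<integral>y. gk t (x - y) * B \<partial>lborel)"
    using i G(1) gk_nonneg[OF t] hB by (intro integral_mono integrable_mult_left) (auto intro: mult_left_mono)
  also have "\<dots> = B" using G(2) by simp
  finally show "(\<integral>y. gk t (x - y) * h y \<partial>lborel) \<le> B" .
  fix q :: real assume q: "q \<ge> 1"
  define Q where "Q = density lborel (\<lambda>y. ennreal (gk t (x - y)))"
  have sQ: "space Q = UNIV" by (simp add: Q_def)
  have PQ: "prob_space Q"
  proof (rule prob_spaceI)
    show "emeasure Q (space Q) = 1"
      unfolding Q_def using G(3) by (subst emeasure_density) auto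
  qed
  interpret Q: prob_space Q by (rule PQ)
  have J: "(\<integral>y. h y \<partial>Q) powr q \<le> (\<integral>y. h y powr q \<partial>Q)"
    by (rule Q.jensen_powr[OF _ _ _ q, where B=B]) (auto simp: Q_def h0 hB)
  have e1: "(\<integral>y. h y \<partial>Q) = (\<integral>y. gk t (x - y) * h y \<partial>lborel)"
    unfolding Q_def using gk_nonneg[OF t] by (subst integral_density) auto
  have e2: "(\<integral>y. h y powr q \<partial>Q) = (\<integral>y. gk t (x - y) * h y powr q \<partial>lborel)"
    unfolding Q_def using gk_nonneg[OF t] by (subst integral_density) auto
  show "(\<integral>y. gk t (x - y) * h y \<partial>lborel) powr q \<le> (\<integral>y. gk t (x - y) * h y powr q \<partial>lborel)"
    using J unfolding e1 e2 .
qed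

lemma Lp_norm2_zero: "Lp_norm2 p (\<lambda>x. 0) = 0"
  by (simp add: Lp_norm2_def esssup_const Let_def)

theorem gen_bound:
  fixes N :: "'w measure" and T :: "'w \<Rightarrow> real" and m :: "real^2 \<Rightarrow> real" and f :: "real^2 \<Rightarrow> complex" and p :: ennreal
  assumes N: "prob_space N" and Tm[measurable]: "T \<in> borel_measurable N" and Tpos: "\<And>\<omega>. \<omega> \<in> space N \<Longrightarrow> T \<omega> > 0"
    and mm[measurable]: "m \<in> borel_measurable borel"
    and mrep: "\<And>k. m k = (\<integral>\<omega>. exp (- T \<omega> * (norm k)\<^sup>2) \<partial>N)"
    and cont: "continuous_on UNIV f" and cpt: "compact (closure {x. f x \<noteq> 0})"
    and p: "1 \<le> p"
  shows "Lp_norm2 p (fourier_multiplier2 m f) \<le> Lp_norm2 p f"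
proof -
  interpret N: prob_space N by (rule N)
  note cf = cc_facts[OF cont cpt]
  have fm[measurable]: "f \<in> borel_measurable borel" by (rule cf(1))
  obtain Bf where Bf0: "Bf \<ge> 0" and Bf: "\<And>y. norm (f y) \<le> Bf" using cf(2) by blast
  have fi: "integrable lborel f" by (rule cf(3))
  let ?Tf = "fourier_multiplier2 m f"
  have Tfm[measurable]: "?Tf \<in> borel_measurable borel"
    unfolding fourier_multiplier2_def[abs_def] by measurable
  show ?thesis
  proof (cases "integrable lborel (\<lambda>k. complex_of_real (m k) * fourier2 f k)")
    case False
    have "?Tf x = 0" for x
    proof -
      have "\<not> integrable lborel (\<lambda>k. exp (\<i> * complex_of_real (k \<bullet> x)) * complex_of_real (m k) * fourier2 f k)"
      proof
        assume "integrable lborel (\<lambda>k. exp (\<i> * complex_of_real (k \<bullet> x)) * complex_of_real (m k) * fourier2 f k)"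
        hence "integrable lborel (\<lambda>k. norm (exp (\<i> * complex_of_real (k \<bullet> x)) * complex_of_real (m k) * fourier2 f k))"
          by (rule integrable_norm)
        hence "integrable lborel (\<lambda>k. norm (complex_of_real (m k) * fourier2 f k))"
          by (simp add: norm_mult)
        hence "integrable lborel (\<lambda>k. complex_of_real (m k) * fourier2 f k)"
          by (subst (asm) integrable_norm_iff) auto
        with False show False by simp
      qed
      thus ?thesis unfolding fourier_multiplier2_def by (simp add: not_integrable_integral_eq)
    qed
    hence "?Tf = (\<lambda>x. 0)" by auto
    thus ?thesis by (simp add: Lp_norm2_zero)
  next
    case True
    have rep: "?Tf x = (\<integral>\<omega>. (\<integral>y. complex_of_real (gk (T \<omega>) (x - y)) * f y \<partial>lborel) \<partial>N)" for x
      by (rule mult_rep[OF N Tm Tpos mrep fi True])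
    define a where "a x \<omega> = (\<integral>y. gk (T \<omega>) (x - y) * norm (f y) \<partial>lborel)" for x \<omega>
    have am[measurable]: "(\<lambda>\<omega>. a x \<omega>) \<in> borel_measurable N" for x
      unfolding a_def by measurable
    have GA: "integrable lborel (\<lambda>y. gk (T \<omega>) (x - y) * h y)"
         "0 \<le> (\<integral>y. gk (T \<omega>) (x - y) * h y \<partial>lborel)"
         "(\<integral>y. gk (T \<omega>) (x - y) * h y \<partial>lborel) \<le> B"
         "\<And>q. q \<ge> 1 \<Longrightarrow> (\<integral>y. gk (T \<omega>) (x - y) * h y \<partial>lborel) powr q \<le> (\<integral>y. gk (T \<omega>) (x - y) * h y powr q \<partial>lborel)"
      if "\<omega> \<in> space N" "h \<in> borel_measurable borel" "\<And>y. 0 \<le> h y" "\<And>y. h y \<le> B" for \<omega> x h B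
      using gk_avg[OF Tpos[OF that(1)] that(2-4)] by auto
    have a0: "0 \<le> a x \<omega>" and aB: "a x \<omega> \<le> Bf" if "\<omega> \<in> space N" for x \<omega>
      using GA[OF that _ _ Bf] unfolding a_def by auto
    have aint: "integrable N (a x)" for x
      by (rule N.integrable_const_bound[where B=Bf]) (use a0 aB in auto)
    have Tf_le: "norm (?Tf x) \<le> (\<integral>\<omega>. a x \<omega> \<partial>N)" for x
    proof -
      let ?G = "\<lambda>\<omega>. (\<integral>y. complex_of_real (gk (T \<omega>) (x - y)) * f y \<partial>lborel)"
      have Gm: "?G \<in> borel_measurable N" by measurable
      have Gle: "norm (?G \<omega>) \<le> a x \<omega>" if "\<omega> \<in> space N" for \<omega>
      proof -
        have "norm (?G \<omega>) \<le> (\<integral>y. norm (complex_of_real (gk (T \<omega>) (x - y)) * f y) \<partial>lborel)"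
          by (rule integral_norm_bound)
        also have "\<dots> = a x \<omega>" unfolding a_def
          using gk_nonneg[OF Tpos[OF that]] by (simp add: norm_mult)
        finally show ?thesis .
      qed
      have "norm (?Tf x) \<le> (\<integral>\<omega>. norm (?G \<omega>) \<partial>N)" unfolding rep by (rule integral_norm_bound)
      also have "\<dots> \<le> (\<integral>\<omega>. a x \<omega> \<partial>N)"
      proof (rule integral_mono[OF _ aint])
        show "integrable N (\<lambda>\<omega>. norm (?G \<omega>))"
        proof (rule N.integrable_const_bound[where B=Bf])
          show "AE \<omega> in N. norm (norm (?G \<omega>)) \<le> Bf"
            by (rule AE_I2) (use Gle aB in \<open>force intro: order.trans\<close>)
        qed (use Gm in simp)
        show "\<And>\<omega>. \<omega> \<in> space N \<Longrightarrow> norm (?G \<omega>) \<le> a x \<omega>" by (rule Gle)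
      qed
      finally show ?thesis .
    qed
    show ?thesis
    proof (cases "p = \<infinity>")
      case True
      let ?E = "esssup lborel (\<lambda>y. ennreal (norm (f y)))"
      show ?thesis
      proof (cases "?E = \<top>")
        case True2: True
        thus ?thesis using True by (simp add: Lp_norm2_def)
      next
        case False2: False
        then obtain s where s: "?E = ennreal s" "s \<ge> 0" by (cases ?E) auto
        have fs: "norm (f y) \<le> s" for y using cont_le_esssup[OF cont, of y] s by simp
        have as: "a x \<omega> \<le> s" if "\<omega> \<in> space N" for x \<omega> using GA[OF that _ _ fs] unfolding a_def by auto
        have "(\<integral>\<omega>. a x \<omega> \<partial>N) \<le> (\<integral>\<omega>. s \<partial>N)" for x
          by (rule integral_mono[OF aint]) (auto simp: as)
        hence "norm (?Tf x) \<le> s" for x using Tf_le[of x] N.prob_space by (simp add: order.trans[OF Tf_le[of x]])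
        hence "esssup lborel (\<lambda>x. ennreal (norm (?Tf x))) \<le> ennreal s"
          by (intro esssup_I) (auto intro: ennreal_leI)
        thus ?thesis using True s by (simp add: Lp_norm2_def)
      qed
    next
      case False
      define q where "q = enn2real p"
      have q1: "q \<ge> 1" unfolding q_def using enn2real_mono[OF p] False by (simp add: less_top)
      have q0: "q > 0" using q1 by simp
      interpret P: pair_sigma_finite "lborel :: (real^2) measure" N
        by (intro pair_sigma_finite.intro sigma_finite_lborel N.sigma_finite_measure_axioms)
      define b where "b x \<omega> = (\<integral>y. gk (T \<omega>) (x - y) * norm (f y) powr q \<partial>lborel)" for x \<omega>
      have hq_m: "(\<lambda>y. norm (f y) powr q) \<in> borel_measurable borel" by measurable
      have hq0: "\<And>y. 0 \<le> norm (f y) powr q" by simp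
      have hqB: "\<And>y. norm (f y) powr q \<le> Bf powr q" using Bf q0 by (intro powr_mono2) auto
      have bm[measurable]: "(\<lambda>\<omega>. b x \<omega>) \<in> borel_measurable N" for x unfolding b_def by measurable
      have b0: "0 \<le> b x \<omega>" and bB: "b x \<omega> \<le> Bf powr q" if "\<omega> \<in> space N" for x \<omega>
        using GA[OF that hq_m hq0 hqB] unfolding b_def by auto
      have bint: "integrable N (b x)" for x
        by (rule N.integrable_const_bound[where B="Bf powr q"]) (use b0 bB in auto)
      have ptw: "norm (?Tf x) powr q \<le> (\<integral>\<omega>. b x \<omega> \<partial>N)" for x
      proof -
        have "norm (?Tf x) powr q \<le> (\<integral>\<omega>. a x \<omega> \<partial>N) powr q" using Tf_le[of x] q0 by (intro powr_mono2) auto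
        also have "\<dots> \<le> (\<integral>\<omega>. a x \<omega> powr q \<partial>N)"
          by (rule N.jensen_powr[OF am _ _ q1, where B=Bf]) (auto simp: a0 aB)
        also have "\<dots> \<le> (\<integral>\<omega>. b x \<omega> \<partial>N)"
        proof (rule integral_mono[OF _ bint])
          show "integrable N (\<lambda>\<omega>. a x \<omega> powr q)"
          proof (rule N.integrable_const_bound[where B="Bf powr q"])
            show "AE \<omega> in N. norm (a x \<omega> powr q) \<le> Bf powr q"
              by (rule AE_I2) (use a0 aB q0 in \<open>auto intro: powr_mono2\<close>)
          qed simp
          show "a x \<omega> powr q \<le> b x \<omega>" if "\<omega> \<in> space N" for \<omega>
            using GA(4)[OF that _ _ Bf q1] unfolding a_def b_def by auto
        qed
        finally show ?thesis .
      qed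
      define IT where "IT = (\<integral>\<^sup>+x. ennreal (norm (?Tf x) powr q) \<partial>lborel)"
      define If where "If = (\<integral>\<^sup>+y. ennreal (norm (f y) powr q) \<partial>lborel)"
      have IT_le: "IT \<le> If"
      proof -
        have "IT \<le> (\<integral>\<^sup>+x. ennreal (\<integral>\<omega>. b x \<omega> \<partial>N) \<partial>lborel)"
          unfolding IT_def by (intro nn_integral_mono ennreal_leI ptw)
        also have "\<dots> = (\<integral>\<^sup>+x. (\<integral>\<^sup>+\<omega>. (\<integral>\<^sup>+y. ennreal (gk (T \<omega>) (x - y) * norm (f y) powr q) \<partial>lborel) \<partial>N) \<partial>lborel)"
        proof (rule nn_integral_cong)
          fix x :: "real^2"
          have "ennreal (\<integral>\<omega>. b x \<omega> \<partial>N) = (\<integral>\<^sup>+\<omega>. ennreal (b x \<omega>) \<partial>N)"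
            by (rule nn_integral_eq_integral[symmetric]) (auto simp: bint b0)
          also have "\<dots> = (\<integral>\<^sup>+\<omega>. (\<integral>\<^sup>+y. ennreal (gk (T \<omega>) (x - y) * norm (f y) powr q) \<partial>lborel) \<partial>N)"
          proof (rule nn_integral_cong)
            fix \<omega> assume \<omega>: "\<omega> \<in> space N"
            show "ennreal (b x \<omega>) = (\<integral>\<^sup>+y. ennreal (gk (T \<omega>) (x - y) * norm (f y) powr q) \<partial>lborel)"
              unfolding b_def
              by (rule nn_integral_eq_integral[symmetric]) (use GA(1)[OF \<omega> hq_m hq0 hqB] gk_nonneg[OF Tpos[OF \<omega>]] in auto)
          qed
          finally show "ennreal (\<integral>\<omega>. b x \<omega> \<partial>N) = (\<integral>\<^sup>+\<omega>. (\<integral>\<^sup>+y. ennreal (gk (T \<omega>) (x - y) * norm (f y) powr q) \<partial>lborel) \<partial>N)" .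
        qed
        also have "\<dots> = (\<integral>\<^sup>+\<omega>. (\<integral>\<^sup>+x. (\<integral>\<^sup>+y. ennreal (gk (T \<omega>) (x - y) * norm (f y) powr q) \<partial>lborel) \<partial>lborel) \<partial>N)"
          by (rule P.Fubini'[symmetric]) measurable
        also have "\<dots> = (\<integral>\<^sup>+\<omega>. If \<partial>N)"
        proof (rule nn_integral_cong)
          fix \<omega> assume \<omega>: "\<omega> \<in> space N"
          have "(\<integral>\<^sup>+x. (\<integral>\<^sup>+y. ennreal (gk (T \<omega>) (x - y) * norm (f y) powr q) \<partial>lborel) \<partial>lborel)
              = (\<integral>\<^sup>+y. (\<integral>\<^sup>+x. ennreal (gk (T \<omega>) (x - y) * norm (f y) powr q) \<partial>lborel) \<partial>lborel)"
            by (rule lborel_pair.Fubini'[symmetric]) measurable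
          also have "\<dots> = (\<integral>\<^sup>+y. ennreal (norm (f y) powr q) \<partial>lborel)"
          proof (rule nn_integral_cong)
            fix y :: "real^2"
            have "(\<integral>\<^sup>+x. ennreal (gk (T \<omega>) (x - y) * norm (f y) powr q) \<partial>lborel)
                = (\<integral>\<^sup>+x. ennreal (gk (T \<omega>) (y - x)) * ennreal (norm (f y) powr q) \<partial>lborel)"
            proof (rule nn_integral_cong)
              fix x :: "real^2"
              have "gk (T \<omega>) (x - y) = gk (T \<omega>) (y - x)" by (simp add: gk_def norm_minus_commute)
              thus "ennreal (gk (T \<omega>) (x - y) * norm (f y) powr q) = ennreal (gk (T \<omega>) (y - x)) * ennreal (norm (f y) powr q)"
                using gk_nonneg[OF Tpos[OF \<omega>]] by (simp add: ennreal_mult)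
            qed
            also have "\<dots> = (\<integral>\<^sup>+x. ennreal (gk (T \<omega>) (y - x)) \<partial>lborel) * ennreal (norm (f y) powr q)"
              by (rule nn_integral_multc) measurable
            also have "\<dots> = ennreal (norm (f y) powr q)" using gk_shift(3)[OF Tpos[OF \<omega>], of y] by simp
            finally show "(\<integral>\<^sup>+x. ennreal (gk (T \<omega>) (x - y) * norm (f y) powr q) \<partial>lborel) = ennreal (norm (f y) powr q)" .
          qed
          finally show "(\<integral>\<^sup>+x. (\<integral>\<^sup>+y. ennreal (gk (T \<omega>) (x - y) * norm (f y) powr q) \<partial>lborel) \<partial>lborel) = If"
            unfolding If_def .
        qed
        also have "\<dots> = If" using N.emeasure_space_1 by simp
        finally show ?thesis .
      qed
      have If_fin: "If < \<top>"
      proof -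
        have "If = ennreal (\<integral>y. norm (f y) powr q \<partial>lborel)"
          unfolding If_def by (rule nn_integral_eq_integral) (auto simp: cf(4)[OF q0])
        thus ?thesis by simp
      qed
      have IT_fin: "IT \<noteq> \<top>" using IT_le If_fin by (auto simp: top_unique)
      have "enn2real IT \<le> enn2real If" using IT_le If_fin by (rule enn2real_mono)
      hence "enn2real IT powr (1 / q) \<le> enn2real If powr (1 / q)" using q0 by (intro powr_mono2) auto
      thus ?thesis using False IT_fin If_fin
        unfolding Lp_norm2_def Let_def q_def[symmetric] IT_def[symmetric] If_def[symmetric]
        by (auto intro: ennreal_leI)
    qed
  qed
qed

definition Aw :: "real \<Rightarrow> real \<Rightarrow> real" where
  "Aw \<gamma> u = indicator {0..} u * u powr (\<gamma> - 1) / Gamma \<gamma>"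
definition Bw :: "real \<Rightarrow> real \<Rightarrow> real" where
  "Bw u \<tau> = indicator {0<..} u * (indicator {0..} \<tau> * \<tau> powr (u - 1) * exp (- exp 1 * \<tau>) / Gamma u)"

lemma Aw_nonneg: "\<gamma> > 0 \<Longrightarrow> Aw \<gamma> u \<ge> 0"
  by (simp add: Aw_def indicator_def Gamma_real_pos less_imp_le)

lemma Bw_nonneg: "Bw u \<tau> \<ge> 0"
  by (simp add: Bw_def indicator_def Gamma_real_pos less_imp_le)

lemma Aw_zero: "u \<le> 0 \<Longrightarrow> Aw \<gamma> u = 0"
  by (cases "u = 0") (auto simp: Aw_def indicator_def)

lemma gamma_nn':
  fixes a c :: real assumes a: "a > 0" and c: "c > 0"
  shows "(\<integral>\<^sup>+x. ennreal (indicator {0..} x * x powr (a - 1) * exp (- c * x) / Gamma a) \<partial>lborel) = ennreal (c powr (- a))"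
proof -
  have "(\<integral>\<^sup>+x. ennreal (indicator {0..} x * x powr (a - 1) * exp (- c * x) / Gamma a) \<partial>lborel)
      = (\<integral>\<^sup>+x. ennreal (indicator {0..} x * x powr (a - 1) * exp (- c * x)) * ennreal (1 / Gamma a) \<partial>lborel)"
    using Gamma_real_pos[OF a] by (intro nn_integral_cong) (simp add: ennreal_mult[symmetric] indicator_def)
  also have "\<dots> = ennreal (Gamma a / c powr a) * ennreal (1 / Gamma a)"
    by (subst nn_integral_multc, simp, subst gamma_nn[OF a c], rule refl)
  also have "\<dots> = ennreal (c powr (- a))"
    using Gamma_real_pos[OF a] c by (simp add: ennreal_mult[symmetric] powr_minus field_simps)
  finally show ?thesis .
qed

lemma layers:
  fixes \<gamma> r :: real assumes \<gamma>: "\<gamma> > 0" and r: "r \<ge> 0"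
  shows "(\<integral>\<^sup>+u. ennreal (Aw \<gamma> u) * (\<integral>\<^sup>+\<tau>. ennreal (Bw u \<tau>) * ennreal (exp (- \<tau> * r)) \<partial>lborel) \<partial>lborel)
       = ennreal (ln (exp 1 + r) powr (- \<gamma>))"
proof -
  define L where "L = ln (exp 1 + r)"
  have er: "exp 1 + r > 1" using r exp_gt_one[of "1::real"] by linarith
  hence L0: "L > 0" unfolding L_def by simp
  have inner: "ennreal (Aw \<gamma> u) * (\<integral>\<^sup>+\<tau>. ennreal (Bw u \<tau>) * ennreal (exp (- \<tau> * r)) \<partial>lborel)
      = ennreal (indicator {0..} u * u powr (\<gamma> - 1) * exp (- L * u) / Gamma \<gamma>)" for u
  proof (cases "u > 0")
    case True
    have "(\<integral>\<^sup>+\<tau>. ennreal (Bw u \<tau>) * ennreal (exp (- \<tau> * r)) \<partial>lborel)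
        = (\<integral>\<^sup>+\<tau>. ennreal (indicator {0..} \<tau> * \<tau> powr (u - 1) * exp (- (exp 1 + r) * \<tau>) / Gamma u) \<partial>lborel)"
    proof (rule nn_integral_cong)
      fix \<tau> :: real
      have "exp (- exp 1 * \<tau>) * exp (- \<tau> * r) = exp (- (exp 1 + r) * \<tau>)"
        by (simp add: exp_add[symmetric] algebra_simps)
      thus "ennreal (Bw u \<tau>) * ennreal (exp (- \<tau> * r)) = ennreal (indicator {0..} \<tau> * \<tau> powr (u - 1) * exp (- (exp 1 + r) * \<tau>) / Gamma u)"
        using True Bw_nonneg[of u \<tau>] by (simp add: Bw_def ennreal_mult[symmetric] mult.assoc[symmetric] mult.commute[of _ "exp (- \<tau> * r)"] del: ennreal_mult)
    qed
    also have "\<dots> = ennreal ((exp 1 + r) powr (- u))"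
      by (rule gamma_nn'[OF True]) (use er in simp)
    also have "(exp 1 + r) powr (- u) = exp (- L * u)"
      using er by (simp add: powr_def L_def)
    finally show ?thesis
      using True Aw_nonneg[OF \<gamma>, of u] by (simp add: Aw_def ennreal_mult[symmetric] del: ennreal_mult)
  next
    case False
    thus ?thesis using Aw_zero[of u \<gamma>] by (cases "u = 0") (auto simp: indicator_def)
  qed
  have "(\<integral>\<^sup>+u. ennreal (Aw \<gamma> u) * (\<integral>\<^sup>+\<tau>. ennreal (Bw u \<tau>) * ennreal (exp (- \<tau> * r)) \<partial>lborel) \<partial>lborel)
      = (\<integral>\<^sup>+u. ennreal (indicator {0..} u * u powr (\<gamma> - 1) * exp (- L * u) / Gamma \<gamma>) \<partial>lborel)"
    unfolding inner ..
  also have "\<dots> = ennreal (L powr (- \<gamma>))" by (rule gamma_nn'[OF \<gamma> L0])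
  finally show ?thesis unfolding L_def .
qed

theorem gen_bound_nn:
  fixes M :: "'w measure" and W :: "'w \<Rightarrow> ennreal" and T :: "'w \<Rightarrow> real"
    and m :: "real^2 \<Rightarrow> real" and f :: "real^2 \<Rightarrow> complex" and p :: ennreal
  assumes Wm[measurable]: "W \<in> borel_measurable M" and Tm[measurable]: "T \<in> borel_measurable M"
    and Tpos: "\<And>\<omega>. T \<omega> > 0"
    and mm[measurable]: "m \<in> borel_measurable borel" and m0: "\<And>k. m k \<ge> 0"
    and mrep: "\<And>k. ennreal (m k) = (\<integral>\<^sup>+\<omega>. W \<omega> * ennreal (exp (- T \<omega> * (norm k)\<^sup>2)) \<partial>M)"
    and m1: "m 0 = 1"
    and cont: "continuous_on UNIV f" and cpt: "compact (closure {x. f x \<noteq> 0})"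
    and p: "1 \<le> p"
  shows "Lp_norm2 p (fourier_multiplier2 m f) \<le> Lp_norm2 p f"
proof -
  define N where "N = density M W"
  have sN: "space N = space M" by (simp add: N_def)
  have PN: "prob_space N"
  proof (rule prob_spaceI)
    have "emeasure N (space N) = (\<integral>\<^sup>+\<omega>. W \<omega> * indicator (space M) \<omega> \<partial>M)"
      unfolding N_def by (subst emeasure_density) auto
    also have "\<dots> = (\<integral>\<^sup>+\<omega>. W \<omega> * ennreal (exp (- T \<omega> * (norm (0::real^2))\<^sup>2)) \<partial>M)"
      by (intro nn_integral_cong) simp
    also have "\<dots> = 1" using mrep[of 0] m1 by simp
    finally show "emeasure N (space N) = 1" .
  qed
  interpret N: prob_space N by (rule PN)
  have TmN[measurable]: "T \<in> borel_measurable N" unfolding N_def using Tm by simp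
  have mrepN: "m k = (\<integral>\<omega>. exp (- T \<omega> * (norm k)\<^sup>2) \<partial>N)" for k
  proof -
    have i: "integrable N (\<lambda>\<omega>. exp (- T \<omega> * (norm k)\<^sup>2))"
    proof (rule N.integrable_const_bound[where B=1])
      show "AE \<omega> in N. norm (exp (- T \<omega> * (norm k)\<^sup>2)) \<le> 1"
        using Tpos by (intro AE_I2) (simp add: mult_nonneg_nonneg less_imp_le)
    qed simp
    have "ennreal (\<integral>\<omega>. exp (- T \<omega> * (norm k)\<^sup>2) \<partial>N) = (\<integral>\<^sup>+\<omega>. ennreal (exp (- T \<omega> * (norm k)\<^sup>2)) \<partial>N)"
      by (rule nn_integral_eq_integral[symmetric]) (use i in auto)
    also have "\<dots> = (\<integral>\<^sup>+\<omega>. W \<omega> * ennreal (exp (- T \<omega> * (norm k)\<^sup>2)) \<partial>M)"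
      unfolding N_def by (subst nn_integral_density) auto
    also have "\<dots> = ennreal (m k)" by (rule mrep[symmetric])
    finally have "ennreal (\<integral>\<omega>. exp (- T \<omega> * (norm k)\<^sup>2) \<partial>N) = ennreal (m k)" .
    moreover have "(\<integral>\<omega>. exp (- T \<omega> * (norm k)\<^sup>2) \<partial>N) \<ge> 0" by (intro integral_nonneg_AE) auto
    ultimately show ?thesis using m0[of k] by simp
  qed
  show ?thesis
    by (rule gen_bound[OF PN TmN Tpos mm mrepN cont cpt p])
qed

lemma Gamma_real_measurable[measurable]: "(Gamma :: real \<Rightarrow> real) \<in> borel_measurable borel"
proof -
  have "(rGamma :: real \<Rightarrow> real) \<in> borel_measurable borel"
    by (rule borel_measurable_continuous_onI) (rule continuous_on_rGamma)
  hence "(\<lambda>x. inverse (rGamma x :: real)) \<in> borel_measurable borel" by measurable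
  thus ?thesis by (simp add: Gamma_def[abs_def])
qed

lemma Aw_measurable[measurable]:
  assumes [measurable]: "f \<in> borel_measurable M"
  shows "(\<lambda>x. Aw \<gamma> (f x)) \<in> borel_measurable M"
  unfolding Aw_def by measurable

lemma Bw_measurable[measurable]:
  assumes [measurable]: "f \<in> borel_measurable M" "g \<in> borel_measurable M"
  shows "(\<lambda>x. Bw (f x) (g x)) \<in> borel_measurable M"
  unfolding Bw_def by measurable

lemma Bw_zero: "\<tau> \<le> 0 \<Longrightarrow> Bw u \<tau> = 0"
  by (cases "\<tau> = 0") (auto simp: Bw_def indicator_def)

theorem lap_bound:
  fixes \<gamma> :: real and f :: "real^2 \<Rightarrow> complex" and p :: ennreal
  assumes \<gamma>: "\<gamma> > 0" and cont: "continuous_on UNIV f" and cpt: "compact (closure {x. f x \<noteq> 0})"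
    and p: "1 \<le> p"
  shows "Lp_norm2 p (fourier_multiplier2 (log_lap_symbol \<gamma>) f) \<le> Lp_norm2 p f"
proof (rule gen_bound_nn[where M="lborel \<Otimes>\<^sub>M lborel"
      and W="\<lambda>(u, \<tau>). ennreal (Aw \<gamma> u) * ennreal (Bw u \<tau>)"
      and T="\<lambda>(u, \<tau>). if \<tau> > 0 then \<tau> else 1", OF _ _ _ _ _ _ _ cont cpt p])
  show "(\<lambda>(u, \<tau>). ennreal (Aw \<gamma> u) * ennreal (Bw u \<tau>)) \<in> borel_measurable (lborel \<Otimes>\<^sub>M lborel)"
    by measurable
  show "(\<lambda>(u, \<tau>). if \<tau> > 0 then \<tau> else 1 :: real) \<in> borel_measurable (lborel \<Otimes>\<^sub>M lborel)"
    by measurable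
  show "\<And>\<omega>. (\<lambda>(u, \<tau>). if \<tau> > 0 then \<tau> else 1 :: real) \<omega> > 0" by auto
  show "log_lap_symbol \<gamma> \<in> borel_measurable borel" unfolding log_lap_symbol_def[abs_def] by measurable
  show "\<And>k. log_lap_symbol \<gamma> k \<ge> 0" by (simp add: log_lap_symbol_def)
  show "log_lap_symbol \<gamma> 0 = 1" by (simp add: log_lap_symbol_def)
  fix k :: "real^2"
  define s where "s = (norm k)\<^sup>2"
  have s0: "s \<ge> 0" by (simp add: s_def)
  have "(\<integral>\<^sup>+\<omega>. (\<lambda>(u, \<tau>). ennreal (Aw \<gamma> u) * ennreal (Bw u \<tau>)) \<omega> * ennreal (exp (- (\<lambda>(u, \<tau>). if \<tau> > 0 then \<tau> else 1) \<omega> * (norm k)\<^sup>2)) \<partial>(lborel \<Otimes>\<^sub>M lborel))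
      = (\<integral>\<^sup>+u. (\<integral>\<^sup>+\<tau>. ennreal (Aw \<gamma> u) * ennreal (Bw u \<tau>) * ennreal (exp (- (if \<tau> > 0 then \<tau> else 1) * s)) \<partial>lborel) \<partial>lborel)"
    by (subst lborel.nn_integral_fst[symmetric]) (auto simp: s_def)
  also have "\<dots> = (\<integral>\<^sup>+u. ennreal (Aw \<gamma> u) * (\<integral>\<^sup>+\<tau>. ennreal (Bw u \<tau>) * ennreal (exp (- \<tau> * s)) \<partial>lborel) \<partial>lborel)"
  proof (rule nn_integral_cong)
    fix u :: real
    have "(\<integral>\<^sup>+\<tau>. ennreal (Aw \<gamma> u) * ennreal (Bw u \<tau>) * ennreal (exp (- (if \<tau> > 0 then \<tau> else 1) * s)) \<partial>lborel)
        = (\<integral>\<^sup>+\<tau>. ennreal (Aw \<gamma> u) * (ennreal (Bw u \<tau>) * ennreal (exp (- \<tau> * s))) \<partial>lborel)"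
    proof (rule nn_integral_cong)
      fix \<tau> :: real
      show "ennreal (Aw \<gamma> u) * ennreal (Bw u \<tau>) * ennreal (exp (- (if \<tau> > 0 then \<tau> else 1) * s)) = ennreal (Aw \<gamma> u) * (ennreal (Bw u \<tau>) * ennreal (exp (- \<tau> * s)))"
        using Bw_zero[of \<tau> u] by (cases "\<tau> > 0") (auto simp: mult.assoc)
    qed
    also have "\<dots> = ennreal (Aw \<gamma> u) * (\<integral>\<^sup>+\<tau>. ennreal (Bw u \<tau>) * ennreal (exp (- \<tau> * s)) \<partial>lborel)"
      by (rule nn_integral_cmult) measurable
    finally show "(\<integral>\<^sup>+\<tau>. ennreal (Aw \<gamma> u) * ennreal (Bw u \<tau>) * ennreal (exp (- (if \<tau> > 0 then \<tau> else 1) * s)) \<partial>lborel)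
        = ennreal (Aw \<gamma> u) * (\<integral>\<^sup>+\<tau>. ennreal (Bw u \<tau>) * ennreal (exp (- \<tau> * s)) \<partial>lborel)" .
  qed
  also have "\<dots> = ennreal (log_lap_symbol \<gamma> k)"
    using layers[OF \<gamma> s0] unfolding log_lap_symbol_def s_def by simp
  finally show "ennreal (log_lap_symbol \<gamma> k) = (\<integral>\<^sup>+\<omega>. (\<lambda>(u, \<tau>). ennreal (Aw \<gamma> u) * ennreal (Bw u \<tau>)) \<omega> * ennreal (exp (- (\<lambda>(u, \<tau>). if \<tau> > 0 then \<tau> else 1) \<omega> * (norm k)\<^sup>2)) \<partial>(lborel \<Otimes>\<^sub>M lborel))"
    by simp
qed

definition Cw :: "real \<Rightarrow> real \<Rightarrow> real" where
  "Cw \<tau> \<sigma> = indicator {0<..} \<sigma> * (\<tau> / (2 * sqrt pi) / (\<sigma> * sqrt \<sigma>) * exp (- \<tau>\<^sup>2 / (4 * \<sigma>)))"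

lemma Cw_measurable[measurable]:
  assumes [measurable]: "f \<in> borel_measurable M" "g \<in> borel_measurable M"
  shows "(\<lambda>x. Cw (f x) (g x)) \<in> borel_measurable M"
  unfolding Cw_def by measurable

lemma sub_layer:
  fixes \<tau> r :: real assumes r: "r \<ge> 0"
  shows "ennreal (Bw u \<tau>) * (\<integral>\<^sup>+\<sigma>. ennreal (Cw \<tau> \<sigma>) * ennreal (exp (- (if \<sigma> > 0 then \<sigma> else 1) * r\<^sup>2)) \<partial>lborel)
       = ennreal (Bw u \<tau>) * ennreal (exp (- \<tau> * r))"
proof (cases "\<tau> > 0")
  case True
  have "(\<integral>\<^sup>+\<sigma>. ennreal (Cw \<tau> \<sigma>) * ennreal (exp (- (if \<sigma> > 0 then \<sigma> else 1) * r\<^sup>2)) \<partial>lborel)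
      = (\<integral>\<^sup>+\<sigma>. ennreal (indicator {0<..} \<sigma> * (\<tau> / (2 * sqrt pi) / (\<sigma> * sqrt \<sigma>) * exp (- \<tau>\<^sup>2 / (4 * \<sigma>)) * exp (- \<sigma> * r\<^sup>2))) \<partial>lborel)"
  proof (rule nn_integral_cong)
    fix \<sigma> :: real
    show "ennreal (Cw \<tau> \<sigma>) * ennreal (exp (- (if \<sigma> > 0 then \<sigma> else 1) * r\<^sup>2))
        = ennreal (indicator {0<..} \<sigma> * (\<tau> / (2 * sqrt pi) / (\<sigma> * sqrt \<sigma>) * exp (- \<tau>\<^sup>2 / (4 * \<sigma>)) * exp (- \<sigma> * r\<^sup>2)))"
    proof (cases "\<sigma> > 0")
      case True
      have e: "(if \<sigma> > 0 then \<sigma> else 1) = \<sigma>" using True by simp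
      show ?thesis unfolding e
        by (subst ennreal_mult''[symmetric]) (simp_all add: Cw_def True mult.assoc)
    qed (simp add: Cw_def)
  qed
  also have "\<dots> = ennreal (exp (- \<tau> * r))" by (rule subordination[OF True r])
  finally show ?thesis by simp
next
  case False
  thus ?thesis using Bw_zero[of \<tau> u] by simp
qed

theorem grad_bound:
  fixes \<gamma> :: real and f :: "real^2 \<Rightarrow> complex" and p :: ennreal
  assumes \<gamma>: "\<gamma> > 0" and cont: "continuous_on UNIV f" and cpt: "compact (closure {x. f x \<noteq> 0})"
    and p: "1 \<le> p"
  shows "Lp_norm2 p (fourier_multiplier2 (log_grad_symbol \<gamma>) f) \<le> Lp_norm2 p f"
proof (rule gen_bound_nn[where M="(lborel \<Otimes>\<^sub>M lborel) \<Otimes>\<^sub>M lborel"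
      and W="\<lambda>(ut, \<sigma>). ennreal (Aw \<gamma> (fst ut)) * ennreal (Bw (fst ut) (snd ut)) * ennreal (Cw (snd ut) \<sigma>)"
      and T="\<lambda>(ut, \<sigma>). if \<sigma> > 0 then \<sigma> else 1", OF _ _ _ _ _ _ _ cont cpt p])
  show "(\<lambda>(ut, \<sigma>). ennreal (Aw \<gamma> (fst ut)) * ennreal (Bw (fst ut) (snd ut)) * ennreal (Cw (snd ut) \<sigma>)) \<in> borel_measurable ((lborel \<Otimes>\<^sub>M lborel) \<Otimes>\<^sub>M lborel)"
    by measurable
  show "(\<lambda>(ut, \<sigma>). if \<sigma> > 0 then \<sigma> else 1 :: real) \<in> borel_measurable ((lborel \<Otimes>\<^sub>M lborel) \<Otimes>\<^sub>M lborel)"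
    by measurable
  show "\<And>\<omega>. (\<lambda>(ut, \<sigma>). if \<sigma> > 0 then \<sigma> else 1 :: real) \<omega> > 0" by auto
  show "log_grad_symbol \<gamma> \<in> borel_measurable borel" unfolding log_grad_symbol_def[abs_def] by measurable
  show "\<And>k. log_grad_symbol \<gamma> k \<ge> 0" by (simp add: log_grad_symbol_def)
  show "log_grad_symbol \<gamma> 0 = 1" by (simp add: log_grad_symbol_def)
  fix k :: "real^2"
  define r where "r = norm k"
  have r0: "r \<ge> 0" by (simp add: r_def)
  have "(\<integral>\<^sup>+\<omega>. (\<lambda>(ut, \<sigma>). ennreal (Aw \<gamma> (fst ut)) * ennreal (Bw (fst ut) (snd ut)) * ennreal (Cw (snd ut) \<sigma>)) \<omega> * ennreal (exp (- (\<lambda>(ut, \<sigma>). if \<sigma> > 0 then \<sigma> else 1) \<omega> * (norm k)\<^sup>2)) \<partial>((lborel \<Otimes>\<^sub>M lborel) \<Otimes>\<^sub>M lborel))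
      = (\<integral>\<^sup>+ut. (\<integral>\<^sup>+\<sigma>. ennreal (Aw \<gamma> (fst ut)) * ennreal (Bw (fst ut) (snd ut)) * ennreal (Cw (snd ut) \<sigma>) * ennreal (exp (- (if \<sigma> > 0 then \<sigma> else 1) * r\<^sup>2)) \<partial>lborel) \<partial>(lborel \<Otimes>\<^sub>M lborel))"
    by (subst lborel.nn_integral_fst[symmetric]) (auto simp: r_def case_prod_beta' cong: if_cong)
  also have "\<dots> = (\<integral>\<^sup>+ut. ennreal (Aw \<gamma> (fst ut)) * (ennreal (Bw (fst ut) (snd ut)) * ennreal (exp (- snd ut * r))) \<partial>(lborel \<Otimes>\<^sub>M lborel))"
  proof (rule nn_integral_cong)
    fix ut :: "real \<times> real"
    have "(\<integral>\<^sup>+\<sigma>. ennreal (Aw \<gamma> (fst ut)) * ennreal (Bw (fst ut) (snd ut)) * ennreal (Cw (snd ut) \<sigma>) * ennreal (exp (- (if \<sigma> > 0 then \<sigma> else 1) * r\<^sup>2)) \<partial>lborel)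
        = (\<integral>\<^sup>+\<sigma>. ennreal (Aw \<gamma> (fst ut)) * ennreal (Bw (fst ut) (snd ut)) * (ennreal (Cw (snd ut) \<sigma>) * ennreal (exp (- (if \<sigma> > 0 then \<sigma> else 1) * r\<^sup>2))) \<partial>lborel)"
      by (simp add: mult.assoc)
    also have "\<dots> = ennreal (Aw \<gamma> (fst ut)) * (ennreal (Bw (fst ut) (snd ut)) * (\<integral>\<^sup>+\<sigma>. ennreal (Cw (snd ut) \<sigma>) * ennreal (exp (- (if \<sigma> > 0 then \<sigma> else 1) * r\<^sup>2)) \<partial>lborel))"
      by (subst nn_integral_cmult) (auto simp: mult.assoc)
    also have "\<dots> = ennreal (Aw \<gamma> (fst ut)) * (ennreal (Bw (fst ut) (snd ut)) * ennreal (exp (- snd ut * r)))"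
      by (simp only: sub_layer[OF r0])
    finally show "(\<integral>\<^sup>+\<sigma>. ennreal (Aw \<gamma> (fst ut)) * ennreal (Bw (fst ut) (snd ut)) * ennreal (Cw (snd ut) \<sigma>) * ennreal (exp (- (if \<sigma> > 0 then \<sigma> else 1) * r\<^sup>2)) \<partial>lborel)
        = ennreal (Aw \<gamma> (fst ut)) * (ennreal (Bw (fst ut) (snd ut)) * ennreal (exp (- snd ut * r)))" .
  qed
  also have "\<dots> = (\<integral>\<^sup>+u. (\<integral>\<^sup>+\<tau>. ennreal (Aw \<gamma> u) * (ennreal (Bw u \<tau>) * ennreal (exp (- \<tau> * r))) \<partial>lborel) \<partial>lborel)"
    by (subst lborel.nn_integral_fst[symmetric]) auto
  also have "\<dots> = (\<integral>\<^sup>+u. ennreal (Aw \<gamma> u) * (\<integral>\<^sup>+\<tau>. ennreal (Bw u \<tau>) * ennreal (exp (- \<tau> * r)) \<partial>lborel) \<partial>lborel)"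
    by (intro nn_integral_cong nn_integral_cmult) measurable
  also have "\<dots> = ennreal (log_grad_symbol \<gamma> k)"
    using layers[OF \<gamma> r0] unfolding log_grad_symbol_def r_def by simp
  finally show "ennreal (log_grad_symbol \<gamma> k) = (\<integral>\<^sup>+\<omega>. (\<lambda>(ut, \<sigma>). ennreal (Aw \<gamma> (fst ut)) * ennreal (Bw (fst ut) (snd ut)) * ennreal (Cw (snd ut) \<sigma>)) \<omega> * ennreal (exp (- (\<lambda>(ut, \<sigma>). if \<sigma> > 0 then \<sigma> else 1) \<omega> * (norm k)\<^sup>2)) \<partial>((lborel \<Otimes>\<^sub>M lborel) \<Otimes>\<^sub>M lborel))"
    by simp
qed

theorem lemma8p2:
  fixes \<gamma> :: real and f :: "real^2 \<Rightarrow> complex" and p :: ennreal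
  assumes "\<gamma> > 0" and "Cc_inf2 f" and "1 \<le> p"
  shows "Lp_norm2 p (fourier_multiplier2 (log_lap_symbol \<gamma>) f) \<le> Lp_norm2 p f
       \<and> Lp_norm2 p (fourier_multiplier2 (log_grad_symbol \<gamma>) f) \<le> Lp_norm2 p f"
proof -
  have cont: "continuous_on UNIV f"
    using assms(2) unfolding Cc_inf2_def smooth2_def by (metis Ck2.simps(1))
  have cpt: "compact (closure {x. f x \<noteq> 0})"
    using assms(2) unfolding Cc_inf2_def by blast
  show ?thesis
    using lap_bound[OF assms(1) cont cpt assms(3)] grad_bound[OF assms(1) cont cpt assms(3)] by blast
qed

end
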